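(* Let $1<p<2$. There is a constant $C_p$ depending only on $p$ with the following property. Let $g\in L^p(\mathbb R)$ with $\|g\|_p=1$, let $T,S\subset\mathbb R$ be countable, and suppose $\{(e_s\tau_tg,\,g^*_{ts}):(t,s)\in T\times S\}$ is a $K$-unconditional Schauder frame of $L^p(\mathbb R)$. Let $\delta>0$ satisfy $\sup_{0<\sigma<\delta}\int_{\mathbb R}|g(x)|^p|e^{2\pi i\sigma x}-1|^p\,dx<2^{-p}$, and put $S_l=S\cap[l\delta,(l+1)\delta)$, $l\in\mathbb Z$. Then for every $f\in L^p(\mathbb R)$, $$\Big(\sum_{t\in T}\sum_{l\in\mathbb Z}\Big(\sum_{s\in S_l}|g^*_{ts}(f)|\Big)^2\Big)^{1/2}\le 2KC_p\|f\|_p.$$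
   Context: $(\tau_t g)(x)=g(x-t)$, $e_s(x)=e^{2\pi i s x}$. A family $\{(u_n,u_n^* )\}\subset X\times X^*$ is a $K$-unconditional Schauder frame of $X$ if for every $x\in X$ the series $\sum_nu_n^*(x)u_n$ converges unconditionally to $x$ and $\|\sum_n\theta_nu_n^*(x)u_n\|\le K\|x\|$ for all scalars $|\theta_n|\le1$. *)

theory Defs
  imports "HOL-Analysis.Analysis"
begin

definition Lp :: "real \<Rightarrow> (real \<Rightarrow> complex) set" where
  "Lp p = {f. f \<in> borel_measurable lborel \<and> integrable lborel (\<lambda>x. cmod (f x) powr p)}"

definition Lp_norm :: "real \<Rightarrow> (real \<Rightarrow> complex) \<Rightarrow> real" where
  "Lp_norm p f = (LINT x|lborel. cmod (f x) powr p) powr (1 / p)"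

definition Lp_dual :: "real \<Rightarrow> ((real \<Rightarrow> complex) \<Rightarrow> complex) \<Rightarrow> bool" where
  "Lp_dual p \<phi> \<longleftrightarrow>
     (\<forall>f\<in>Lp p. \<forall>h\<in>Lp p. \<phi> (\<lambda>x. f x + h x) = \<phi> f + \<phi> h) \<and>
     (\<forall>f\<in>Lp p. \<forall>c. \<phi> (\<lambda>x. c * f x) = c * \<phi> f) \<and>
     (\<exists>B. \<forall>f\<in>Lp p. cmod (\<phi> f) \<le> B * Lp_norm p f)"

definition transl :: "real \<Rightarrow> (real \<Rightarrow> complex) \<Rightarrow> real \<Rightarrow> complex" where
  "transl t g = (\<lambda>x. g (x - t))"

definition expo :: "real \<Rightarrow> real \<Rightarrow> complex" where
  "expo s = (\<lambda>x. exp (2 * pi * \<i> * complex_of_real (s * x)))"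

definition Lp_uncond_conv ::
  "real \<Rightarrow> 'i set \<Rightarrow> ('i \<Rightarrow> complex) \<Rightarrow> ('i \<Rightarrow> real \<Rightarrow> complex) \<Rightarrow> (real \<Rightarrow> complex) \<Rightarrow> bool" where
  "Lp_uncond_conv p I c u y \<longleftrightarrow>
     (\<forall>\<epsilon>>0. \<exists>F0. finite F0 \<and> F0 \<subseteq> I \<and>
        (\<forall>F. finite F \<and> F0 \<subseteq> F \<and> F \<subseteq> I \<longrightarrow>
           Lp_norm p (\<lambda>x. y x - (\<Sum>i\<in>F. c i * u i x)) < \<epsilon>))"

definition Lp_uncond_frame ::
  "real \<Rightarrow> 'i set \<Rightarrow> ('i \<Rightarrow> real \<Rightarrow> complex) \<Rightarrow> ('i \<Rightarrow> (real \<Rightarrow> complex) \<Rightarrow> complex) \<Rightarrow> real \<Rightarrow> bool" where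
  "Lp_uncond_frame p I u us K \<longleftrightarrow>
     (\<forall>i\<in>I. u i \<in> Lp p \<and> Lp_dual p (us i)) \<and>
     (\<forall>x\<in>Lp p.
        Lp_uncond_conv p I (\<lambda>i. us i x) u x \<and>
        (\<forall>\<theta>::'i \<Rightarrow> complex. (\<forall>i\<in>I. cmod (\<theta> i) \<le> 1) \<longrightarrow>
           (\<exists>y\<in>Lp p. Lp_uncond_conv p I (\<lambda>i. \<theta> i * us i x) u y \<and>
                      Lp_norm p y \<le> K * Lp_norm p x)))"

end

theory Submission
  imports Defs
begin

lemma Lp_norm_nonneg: "Lp_norm p f \<ge> 0"
  by (simp add: Lp_norm_def)

lemma LpD: assumes "f \<in> Lp p"
  shows "f \<in> borel_measurable lborel" "integrable lborel (\<lambda>x. cmod (f x) powr p)"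
  using assms by (auto simp: Lp_def)

lemma Lp_int_nonneg: "(LINT x|lborel. cmod (f x) powr p) \<ge> 0"
  by (rule integral_nonneg_AE) simp

lemma Lp_norm_powr: assumes "p > 0"
  shows "Lp_norm p f powr p = (LINT x|lborel. cmod (f x) powr p)"
  using Lp_int_nonneg[of f p] assms
  by (simp add: Lp_norm_def powr_powr)

lemma Lp_norm_eq_iff_int: assumes "p > 0"
  shows "Lp_norm p f = Lp_norm p h \<longleftrightarrow> (LINT x|lborel. cmod (f x) powr p) = (LINT x|lborel. cmod (h x) powr p)"
  using Lp_norm_powr[OF assms, of f] Lp_norm_powr[OF assms, of h]
  by (metis Lp_norm_def)

lemma powr_add_bound:
  fixes a b :: complex assumes "p > 0"
  shows "cmod (a + b) powr p \<le> 2 powr p * (cmod a powr p + cmod b powr p)"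
proof -
  have "cmod (a + b) \<le> 2 * max (cmod a) (cmod b)"
    using norm_triangle_ineq[of a b] by linarith
  hence "cmod (a + b) powr p \<le> (2 * max (cmod a) (cmod b)) powr p"
    using assms by (intro powr_mono2) auto
  also have "\<dots> = 2 powr p * max (cmod a) (cmod b) powr p"
    by (simp add: powr_mult)
  also have "\<dots> \<le> 2 powr p * (cmod a powr p + cmod b powr p)"
    by (intro mult_left_mono) (auto simp: max_def)
  finally show ?thesis .
qed

lemma Lp_add: assumes "p > 0" "f \<in> Lp p" "h \<in> Lp p"
  shows "(\<lambda>x. f x + h x) \<in> Lp p"
proof -
  have m: "f \<in> borel_measurable lborel" "h \<in> borel_measurable lborel"
    using assms by (auto simp: Lp_def)
  have "integrable lborel (\<lambda>x. 2 powr p * (cmod (f x) powr p + cmod (h x) powr p))"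
    using assms by (auto simp: Lp_def)
  moreover have "(\<lambda>x. cmod (f x + h x) powr p) \<in> borel_measurable lborel"
    using m by measurable
  ultimately have "integrable lborel (\<lambda>x. cmod (f x + h x) powr p)"
  proof (rule Bochner_Integration.integrable_bound)
    show "AE x in lborel. norm (cmod (f x + h x) powr p) \<le> norm (2 powr p * (cmod (f x) powr p + cmod (h x) powr p))"
      using powr_add_bound[OF assms(1)] by (intro AE_I2) (auto simp: abs_mult)
  qed
  thus ?thesis using m by (auto simp: Lp_def)
qed

lemma Lp_cmult: assumes "f \<in> Lp p" "p > 0"
  shows "(\<lambda>x. c * f x) \<in> Lp p"
proof -
  have m: "f \<in> borel_measurable lborel" using assms by (auto simp: Lp_def)
  have "integrable lborel (\<lambda>x. cmod c powr p * cmod (f x) powr p)"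
    using assms by (auto simp: Lp_def)
  hence "integrable lborel (\<lambda>x. cmod (c * f x) powr p)"
    by (simp add: norm_mult powr_mult)
  thus ?thesis using m by (auto simp: Lp_def)
qed

lemma Lp_norm_cmult: assumes "p > 0"
  shows "Lp_norm p (\<lambda>x. c * f x) = cmod c * Lp_norm p f"
proof -
  have "(LINT x|lborel. cmod (c * f x) powr p) = cmod c powr p * (LINT x|lborel. cmod (f x) powr p)"
    by (simp add: norm_mult powr_mult)
  thus ?thesis using assms Lp_int_nonneg[of f p]
    by (simp add: Lp_norm_def powr_mult powr_powr)
qed

lemma Lp_minus: assumes "f \<in> Lp p" "p > 0" shows "(\<lambda>x. - f x) \<in> Lp p"
  using Lp_cmult[OF assms, of "-1"] by simp

lemma Lp_norm_minus: "Lp_norm p (\<lambda>x. - f x) = Lp_norm p f"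
  by (simp add: Lp_norm_def)

lemma Lp_diff: assumes "p > 0" "f \<in> Lp p" "h \<in> Lp p"
  shows "(\<lambda>x. f x - h x) \<in> Lp p"
  using Lp_add[OF assms(1,2) Lp_minus[OF assms(3,1)]] by simp

lemma Lp_zero: "(\<lambda>x. 0) \<in> Lp p"
  by (simp add: Lp_def)

lemma Lp_sum: assumes "p > 0" "finite I" "\<And>i. i \<in> I \<Longrightarrow> f i \<in> Lp p"
  shows "(\<lambda>x. \<Sum>i\<in>I. f i x) \<in> Lp p"
  using assms(2,3)
proof (induction I rule: finite_induct)
  case empty thus ?case by (simp add: Lp_zero)
next
  case (insert a I)
  thus ?case using Lp_add[OF assms(1), of "f a" "\<lambda>x. \<Sum>i\<in>I. f i x"] by simp
qed


lemma powr_concave: assumes "0 < r" "r \<le> 1" shows "concave_on {0<..} (\<lambda>x::real. x powr r)"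
proof (rule f''_le0_imp_concave[where f' = "\<lambda>x. r * x powr (r - 1)" and f'' = "\<lambda>x. r * ((r - 1) * x powr (r - 1 - 1))"])
  fix x :: real assume x: "x \<in> {0<..}"
  show "((\<lambda>x. x powr r) has_real_derivative r * x powr (r - 1)) (at x)"
    using x by (simp add: has_real_derivative_powr)
  show "((\<lambda>x. r * x powr (r - 1)) has_real_derivative r * ((r - 1) * x powr (r - 1 - 1))) (at x)"
    using x by (intro DERIV_cmult has_real_derivative_powr) simp
  show "r * ((r - 1) * x powr (r - 1 - 1)) \<le> 0"
  proof -
    have "(r - 1) * x powr (r - 1 - 1) \<le> 0"
      by (rule mult_nonpos_nonneg) (use assms in auto)
    thus ?thesis using mult_nonneg_nonpos[of r "(r - 1) * x powr (r - 1 - 1)"] assms by linarith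
  qed
qed auto

lemma cvx_ineq:
  fixes u v t p :: real
  assumes "p \<ge> 1" "u \<ge> 0" "v \<ge> 0" "0 \<le> t" "t \<le> 1"
  shows "((1 - t) * u + t * v) powr p \<le> (1 - t) * u powr p + t * v powr p"
proof -
  have tp: "s powr p \<le> s" if "0 \<le> s" "s \<le> 1" for s :: real
    using that assms(1) powr_le_one_le[of s p] by (cases "s = 0") auto
  consider "u > 0" "v > 0" | "u = 0" | "v = 0" using assms by linarith
  thus ?thesis
  proof cases
    case 1 thus ?thesis using convex_onD[OF powr_convex[OF assms(1)], of t u v] assms by simp
  next
    case 2 thus ?thesis using tp[of t] assms powr_ge_zero[of v p]
      by (simp add: powr_mult mult_right_mono)
  next
    case 3 thus ?thesis using tp[of "1 - t"] assms powr_ge_zero[of u p]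
      by (simp add: powr_mult mult_right_mono)
  qed
qed

lemma ccv_ineq:
  fixes u v t r :: real
  assumes "0 < r" "r \<le> 1" "u \<ge> 0" "v \<ge> 0" "0 \<le> t" "t \<le> 1"
  shows "((1 - t) * u + t * v) powr r \<ge> (1 - t) * u powr r + t * v powr r"
proof -
  have tp: "s powr r \<ge> s" if "0 \<le> s" "s \<le> 1" for s :: real
    using that assms powr_mono'[of r 1 s] by (cases "s = 0") auto
  consider "u > 0" "v > 0" | "u = 0" | "v = 0" using assms by linarith
  thus ?thesis
  proof cases
    case 1 thus ?thesis using concave_onD[OF powr_concave[OF assms(1,2)], of t u v] assms by simp
  next
    case 2 thus ?thesis using tp[of t] assms powr_ge_zero[of v r]
      by (simp add: powr_mult mult_right_mono)
  next
    case 3 thus ?thesis using tp[of "1 - t"] assms powr_ge_zero[of u r]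
      by (simp add: powr_mult mult_right_mono)
  qed
qed

lemma split_ab:
  fixes a b F G :: real assumes "a > 0" "b > 0"
  shows "F + G = (a + b) * ((1 - b/(a+b)) * (F/a) + (b/(a+b)) * (G/b))"
proof -
  have e: "1 - b/(a+b) = a/(a+b)" using assms by (simp add: field_simps)
  have "(a + b) * ((a/(a+b)) * (F/a) + (b/(a+b)) * (G/b)) = F + G"
    using assms by (simp add: distrib_left)
  thus ?thesis using e by simp
qed

lemma mink_pt:
  fixes a b F G p :: real
  assumes "p \<ge> 1" "a > 0" "b > 0" "F \<ge> 0" "G \<ge> 0"
  shows "(F + G) powr p \<le> (a + b) powr p * ((a/(a+b)) / a powr p * F powr p + (b/(a+b)) / b powr p * G powr p)"
proof -
  have e: "1 - b/(a+b) = a/(a+b)" using assms by (simp add: field_simps)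
  have "(F + G) powr p = (a + b) powr p * ((1 - b/(a+b)) * (F/a) + (b/(a+b)) * (G/b)) powr p"
    using assms by (subst split_ab[OF assms(2,3)]) (simp add: powr_mult)
  also have "\<dots> \<le> (a + b) powr p * ((1 - b/(a+b)) * (F/a) powr p + (b/(a+b)) * (G/b) powr p)"
    using assms by (intro mult_left_mono cvx_ineq) auto
  finally show ?thesis using assms e by (simp add: powr_divide)
qed

lemma rmink_pt:
  fixes a b F G r :: real
  assumes "0 < r" "r \<le> 1" "a > 0" "b > 0" "F \<ge> 0" "G \<ge> 0"
  shows "(F + G) powr r \<ge> (a + b) powr r * ((a/(a+b)) / a powr r * F powr r + (b/(a+b)) / b powr r * G powr r)"
proof -
  have e: "1 - b/(a+b) = a/(a+b)" using assms by (simp add: field_simps)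
  have "(F + G) powr r = (a + b) powr r * ((1 - b/(a+b)) * (F/a) + (b/(a+b)) * (G/b)) powr r"
    using assms by (subst split_ab[OF assms(3,4)]) (simp add: powr_mult)
  also have "\<dots> \<ge> (a + b) powr r * ((1 - b/(a+b)) * (F/a) powr r + (b/(a+b)) * (G/b) powr r)"
    using assms by (intro mult_left_mono ccv_ineq) auto
  finally show ?thesis using assms e by (simp add: powr_divide)
qed

lemma powr_subadd:
  fixes x y r :: real assumes "0 < r" "r \<le> 1" "x \<ge> 0" "y \<ge> 0"
  shows "(x + y) powr r \<le> x powr r + y powr r"
proof (cases "x + y = 0")
  case True thus ?thesis using assms by simp
next
  case False
  hence s: "x + y > 0" using assms by simp
  have "x powr r + y powr r \<ge> (x+y) powr r * (x/(x+y) + y/(x+y))"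
  proof -
    have 1: "x powr r \<ge> (x+y) powr r * (x/(x+y))"
    proof -
      have "(x/(x+y)) powr r \<ge> x/(x+y)"
        using powr_mono'[of r 1 "x/(x+y)"] assms s by (cases "x = 0") auto
      hence "(x+y) powr r * (x/(x+y)) powr r \<ge> (x+y) powr r * (x/(x+y))"
        by (intro mult_left_mono) auto
      thus ?thesis using s assms by (simp add: powr_divide)
    qed
    have 2: "y powr r \<ge> (x+y) powr r * (y/(x+y))"
    proof -
      have "(y/(x+y)) powr r \<ge> y/(x+y)"
        using powr_mono'[of r 1 "y/(x+y)"] assms s by (cases "y = 0") auto
      hence "(x+y) powr r * (y/(x+y)) powr r \<ge> (x+y) powr r * (y/(x+y))"
        by (intro mult_left_mono) auto
      thus ?thesis using s assms by (simp add: powr_divide)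
    qed
    show ?thesis using 1 2 by (simp add: distrib_left)
  qed
  also have "x/(x+y) + y/(x+y) = 1" using s by (simp add: add_divide_distrib[symmetric])
  finally show ?thesis by simp
qed

lemma Lp_norm_zero_AE: assumes "p > 0" "f \<in> Lp p" "Lp_norm p f = 0"
  shows "AE x in lborel. f x = 0"
proof -
  have "(LINT x|lborel. cmod (f x) powr p) = 0"
    using Lp_norm_powr[OF assms(1), of f] assms(3) by simp
  hence "AE x in lborel. cmod (f x) powr p = 0"
    using integral_nonneg_eq_0_iff_AE[of lborel "\<lambda>x. cmod (f x) powr p"] assms(2)
    by (auto simp: Lp_def)
  thus ?thesis by eventually_elim simp
qed

lemma Lp_norm_cong_AE: assumes "AE x in lborel. f x = h x"
  and [measurable]: "f \<in> borel_measurable lborel" "h \<in> borel_measurable lborel"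
  shows "Lp_norm p f = Lp_norm p h"
proof -
  have "(LINT x|lborel. cmod (f x) powr p) = (LINT x|lborel. cmod (h x) powr p)"
    by (rule integral_cong_AE) (use assms in \<open>auto elim: AE_mp\<close>)
  thus ?thesis by (simp add: Lp_norm_def)
qed

lemma minkowski2:
  assumes p: "p \<ge> 1" and f: "f \<in> Lp p" and h: "h \<in> Lp p"
  shows "Lp_norm p (\<lambda>x. f x + h x) \<le> Lp_norm p f + Lp_norm p h"
proof -
  have p0: "p > 0" using p by simp
  define a where "a = Lp_norm p f"
  define b where "b = Lp_norm p h"
  have a0: "a \<ge> 0" "b \<ge> 0" by (auto simp: a_def b_def Lp_norm_nonneg)
  consider "a = 0" | "b = 0" | "a > 0" "b > 0" using a0 by linarith
  thus ?thesis
  proof cases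
    case 1
    have "AE x in lborel. f x + h x = h x"
      using Lp_norm_zero_AE[OF p0 f] 1 by (auto simp: a_def elim: AE_mp)
    hence "Lp_norm p (\<lambda>x. f x + h x) = Lp_norm p h"
      by (rule Lp_norm_cong_AE) (use f h in \<open>auto simp: Lp_def\<close>)
    thus ?thesis using 1 by (simp add: a_def)
  next
    case 2
    have "AE x in lborel. f x + h x = f x"
      using Lp_norm_zero_AE[OF p0 h] 2 by (auto simp: b_def elim: AE_mp)
    hence "Lp_norm p (\<lambda>x. f x + h x) = Lp_norm p f"
      by (rule Lp_norm_cong_AE) (use f h in \<open>auto simp: Lp_def\<close>)
    thus ?thesis using 2 by (simp add: b_def)
  next
    case 3
    define c1 where "c1 = (a/(a+b)) / a powr p"
    define c2 where "c2 = (b/(a+b)) / b powr p"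
    have intf: "integrable lborel (\<lambda>x. cmod (f x) powr p)"
     and inth: "integrable lborel (\<lambda>x. cmod (h x) powr p)"
     and intfh: "integrable lborel (\<lambda>x. cmod (f x + h x) powr p)"
      using f h Lp_add[OF p0 f h] by (auto simp: Lp_def)
    have "(LINT x|lborel. cmod (f x + h x) powr p)
          \<le> (LINT x|lborel. (a + b) powr p * (c1 * cmod (f x) powr p + c2 * cmod (h x) powr p))"
    proof (rule integral_mono)
      show "integrable lborel (\<lambda>x. (a + b) powr p * (c1 * cmod (f x) powr p + c2 * cmod (h x) powr p))"
        using intf inth by auto
      fix x
      have "cmod (f x + h x) powr p \<le> (cmod (f x) + cmod (h x)) powr p"
        using p0 by (intro powr_mono2) (auto simp: norm_triangle_ineq)
      also have "\<dots> \<le> (a + b) powr p * (c1 * cmod (f x) powr p + c2 * cmod (h x) powr p)"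
        unfolding c1_def c2_def by (rule mink_pt) (use p 3 in auto)
      finally show "cmod (f x + h x) powr p \<le> (a + b) powr p * (c1 * cmod (f x) powr p + c2 * cmod (h x) powr p)" .
    qed (use intfh in auto)
    also have "\<dots> = (a + b) powr p * (c1 * a powr p + c2 * b powr p)"
      using intf inth Lp_norm_powr[OF p0, of f] Lp_norm_powr[OF p0, of h]
      by (simp add: a_def b_def)
    also have "c1 * a powr p + c2 * b powr p = a/(a+b) + b/(a+b)"
      using 3 by (simp add: c1_def c2_def)
    also have "a/(a+b) + b/(a+b) = 1"
      using 3 by (simp add: add_divide_distrib[symmetric])
    finally have "Lp_norm p (\<lambda>x. f x + h x) powr p \<le> (a + b) powr p"
      using Lp_norm_powr[OF p0, of "\<lambda>x. f x + h x"] by simp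
    show ?thesis
    proof (rule ccontr)
      assume "\<not> ?thesis"
      hence "a + b < Lp_norm p (\<lambda>x. f x + h x)" by (simp add: a_def b_def)
      hence "(a + b) powr p < Lp_norm p (\<lambda>x. f x + h x) powr p"
        using p0 a0 by (intro powr_less_mono2) auto
      thus False using \<open>Lp_norm p (\<lambda>x. f x + h x) powr p \<le> (a + b) powr p\<close> by simp
    qed
  qed
qed


lemma minkowski_sum:
  assumes p: "p \<ge> 1" and "finite I" and "\<And>i. i \<in> I \<Longrightarrow> f i \<in> Lp p"
  shows "Lp_norm p (\<lambda>x. \<Sum>i\<in>I. f i x) \<le> (\<Sum>i\<in>I. Lp_norm p (f i))"
  using assms(2,3)
proof (induction I rule: finite_induct)
  case empty thus ?case by (simp add: Lp_norm_def)
next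
  case (insert a I)
  have "Lp_norm p (\<lambda>x. \<Sum>i\<in>insert a I. f i x) = Lp_norm p (\<lambda>x. f a x + (\<Sum>i\<in>I. f i x))"
    using insert by simp
  also have "\<dots> \<le> Lp_norm p (f a) + Lp_norm p (\<lambda>x. \<Sum>i\<in>I. f i x)"
    using p insert by (intro minkowski2 Lp_sum) auto
  also have "\<dots> \<le> Lp_norm p (f a) + (\<Sum>i\<in>I. Lp_norm p (f i))"
    using insert by simp
  finally show ?case using insert by simp
qed

lemma minkowski_diff:
  assumes p: "p \<ge> 1" and f: "f \<in> Lp p" and h: "h \<in> Lp p"
  shows "Lp_norm p (\<lambda>x. f x - h x) \<le> Lp_norm p f + Lp_norm p h"
  using minkowski2[OF p f Lp_minus[OF h], of] p Lp_norm_minus[of p h] by simp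

definition NN :: "real \<Rightarrow> (real \<Rightarrow> real) \<Rightarrow> real" where
  "NN r H = (LINT x|lborel. H x powr r) powr (1/r)"

lemma NN_nonneg: "NN r H \<ge> 0" by (simp add: NN_def)

lemma NN_powr: assumes "r > 0" "\<And>x. H x \<ge> 0"
  shows "NN r H powr r = (LINT x|lborel. H x powr r)"
proof -
  have "(LINT x|lborel. H x powr r) \<ge> 0" by (rule integral_nonneg_AE) simp
  thus ?thesis using assms by (simp add: NN_def powr_powr)
qed

lemma rev_mink2:
  fixes F G :: "real \<Rightarrow> real"
  assumes r: "0 < r" "r \<le> 1"
    and [measurable]: "F \<in> borel_measurable lborel" "G \<in> borel_measurable lborel"
    and nn: "\<And>x. F x \<ge> 0" "\<And>x. G x \<ge> 0"
    and iF: "integrable lborel (\<lambda>x. F x powr r)" and iG: "integrable lborel (\<lambda>x. G x powr r)"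
  shows "integrable lborel (\<lambda>x. (F x + G x) powr r)"
    and "NN r F + NN r G \<le> NN r (\<lambda>x. F x + G x)"
proof -
  show iFG: "integrable lborel (\<lambda>x. (F x + G x) powr r)"
  proof (rule Bochner_Integration.integrable_bound)
    show "integrable lborel (\<lambda>x. F x powr r + G x powr r)" using iF iG by auto
    show "AE x in lborel. norm ((F x + G x) powr r) \<le> norm (F x powr r + G x powr r)"
      using powr_subadd[OF r nn(1) nn(2)] nn by (intro AE_I2) auto
  qed measurable
  define a where "a = NN r F"
  define b where "b = NN r G"
  have a0: "a \<ge> 0" "b \<ge> 0" by (auto simp: a_def b_def NN_nonneg)
  have zeroAE: "AE x in lborel. H x = 0" if "NN r H = 0" "integrable lborel (\<lambda>x. H x powr r)" "\<And>x. H x \<ge> 0"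
    for H
  proof -
    have "(LINT x|lborel. H x powr r) = 0"
      using NN_powr[of r H] that r by simp
    hence "AE x in lborel. H x powr r = 0"
      using integral_nonneg_eq_0_iff_AE[of lborel "\<lambda>x. H x powr r"] that by auto
    thus ?thesis by eventually_elim simp
  qed
  consider "a = 0" | "b = 0" | "a > 0" "b > 0" using a0 by linarith
  thus "NN r F + NN r G \<le> NN r (\<lambda>x. F x + G x)"
  proof cases
    case 1
    have "AE x in lborel. (F x + G x) powr r = G x powr r"
      using zeroAE[of F] 1 iF nn by (auto simp: a_def elim: AE_mp)
    hence "(LINT x|lborel. (F x + G x) powr r) = (LINT x|lborel. G x powr r)"
      by (intro integral_cong_AE) auto
    thus ?thesis using 1 by (simp add: a_def NN_def)
  next
    case 2
    have "AE x in lborel. (F x + G x) powr r = F x powr r"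
      using zeroAE[of G] 2 iG nn by (auto simp: b_def elim: AE_mp)
    hence "(LINT x|lborel. (F x + G x) powr r) = (LINT x|lborel. F x powr r)"
      by (intro integral_cong_AE) auto
    thus ?thesis using 2 by (simp add: b_def NN_def)
  next
    case 3
    define c1 where "c1 = (a/(a+b)) / a powr r"
    define c2 where "c2 = (b/(a+b)) / b powr r"
    have "(LINT x|lborel. (a + b) powr r * (c1 * F x powr r + c2 * G x powr r))
          \<le> (LINT x|lborel. (F x + G x) powr r)"
    proof (rule integral_mono)
      show "integrable lborel (\<lambda>x. (a + b) powr r * (c1 * F x powr r + c2 * G x powr r))"
        using iF iG by auto
      fix x
      show "(a + b) powr r * (c1 * F x powr r + c2 * G x powr r) \<le> (F x + G x) powr r"
        unfolding c1_def c2_def by (rule rmink_pt) (use r 3 nn in auto)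
    qed (use iFG in auto)
    also have "(LINT x|lborel. (a + b) powr r * (c1 * F x powr r + c2 * G x powr r))
        = (a + b) powr r * (c1 * a powr r + c2 * b powr r)"
      using iF iG NN_powr[of r F] NN_powr[of r G] r nn
      by (simp add: a_def b_def)
    also have "c1 * a powr r + c2 * b powr r = a/(a+b) + b/(a+b)"
      using 3 by (simp add: c1_def c2_def)
    also have "a/(a+b) + b/(a+b) = 1"
      using 3 by (simp add: add_divide_distrib[symmetric])
    finally have le: "(a + b) powr r \<le> (LINT x|lborel. (F x + G x) powr r)" by simp
    have "((a + b) powr r) powr (1/r) \<le> (LINT x|lborel. (F x + G x) powr r) powr (1/r)"
      using r a0 by (intro powr_mono2 le) auto
    thus ?thesis using r a0 by (simp add: NN_def powr_powr a_def b_def)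
  qed
qed

lemma rev_mink_sum:
  fixes F :: "'i \<Rightarrow> real \<Rightarrow> real"
  assumes r: "0 < r" "r \<le> 1" and "finite I"
    and "\<And>i. i \<in> I \<Longrightarrow> F i \<in> borel_measurable lborel"
    and "\<And>i x. i \<in> I \<Longrightarrow> F i x \<ge> 0"
    and "\<And>i. i \<in> I \<Longrightarrow> integrable lborel (\<lambda>x. F i x powr r)"
  shows "integrable lborel (\<lambda>x. (\<Sum>i\<in>I. F i x) powr r) \<and>
         (\<Sum>i\<in>I. NN r (F i)) \<le> NN r (\<lambda>x. \<Sum>i\<in>I. F i x)"
  using assms(3-)
proof (induction I rule: finite_induct)
  case empty thus ?case by (simp add: NN_def)
next
  case (insert a I)
  have m: "(\<lambda>x. \<Sum>i\<in>I. F i x) \<in> borel_measurable lborel"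
    using insert by (intro borel_measurable_sum) auto
  have IH: "integrable lborel (\<lambda>x. (\<Sum>i\<in>I. F i x) powr r)" "(\<Sum>i\<in>I. NN r (F i)) \<le> NN r (\<lambda>x. \<Sum>i\<in>I. F i x)"
    using insert by auto
  note R = rev_mink2[OF r, of "F a" "\<lambda>x. \<Sum>i\<in>I. F i x"]
  have R1: "integrable lborel (\<lambda>x. (F a x + (\<Sum>i\<in>I. F i x)) powr r)"
   and R2: "NN r (F a) + NN r (\<lambda>x. \<Sum>i\<in>I. F i x) \<le> NN r (\<lambda>x. F a x + (\<Sum>i\<in>I. F i x))"
    using R insert m IH by (auto intro!: sum_nonneg)
  show ?case using insert R1 R2 IH by simp
qed

lemma transl_integrable_iff:
  fixes F :: "real \<Rightarrow> 'a::{banach, second_countable_topology}"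
  shows "integrable lborel (\<lambda>x. F (x - t)) \<longleftrightarrow> integrable lborel F"
  using lborel_integrable_real_affine_iff[of 1 F "-t"] by simp

lemma transl_integral:
  fixes F :: "real \<Rightarrow> 'a::{banach, second_countable_topology}"
  shows "(LINT x|lborel. F (x - t)) = (LINT x|lborel. F x)"
  using lborel_integral_real_affine[of 1 F "-t"] by simp


fun ravg :: "(complex \<Rightarrow> real) \<Rightarrow> complex list \<Rightarrow> complex \<Rightarrow> real" where
  "ravg \<phi> [] c = \<phi> c"
| "ravg \<phi> (a # as) c = (ravg \<phi> as (c + a) + ravg \<phi> as (c - a)) / 2"

lemma ravg_lin: "ravg (\<lambda>z. \<alpha> * \<phi> z + \<beta> * \<psi> z) as c = \<alpha> * ravg \<phi> as c + \<beta> * ravg \<psi> as c"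
  by (induction as arbitrary: c) (simp_all add: field_simps)

lemma ravg_mono: "(\<And>z. \<phi> z \<le> \<psi> z) \<Longrightarrow> ravg \<phi> as c \<le> ravg \<psi> as c"
proof (induction as arbitrary: c)
  case Nil thus ?case by simp
next
  case (Cons a as)
  from Cons.IH[OF Cons.prems, of "c + a"] Cons.IH[OF Cons.prems, of "c - a"] show ?case by simp
qed

lemma ravg_nonneg: "(\<And>z. \<phi> z \<ge> 0) \<Longrightarrow> ravg \<phi> as c \<ge> 0"
proof (induction as arbitrary: c)
  case Nil thus ?case by simp
next
  case (Cons a as)
  from Cons.IH[OF Cons.prems, of "c + a"] Cons.IH[OF Cons.prems, of "c - a"] show ?case by simp
qed

lemma pow4: "(x::real) ^ 4 = (x ^ 2) ^ 2" by (simp add: power4_eq_xxxx power2_eq_square)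

lemma cmod_sq_pm:
  fixes c a :: complex
  shows "cmod (c + a) ^ 2 = cmod c ^ 2 + cmod a ^ 2 + 2 * (Re c * Re a + Im c * Im a)"
    and "cmod (c - a) ^ 2 = cmod c ^ 2 + cmod a ^ 2 - 2 * (Re c * Re a + Im c * Im a)"
  by (simp_all only: cmod_power2) (simp_all add: power2_eq_square algebra_simps)

lemma cs_ineq: fixes c a :: complex
  shows "(Re c * Re a + Im c * Im a)^2 \<le> cmod c ^ 2 * cmod a ^ 2"
proof -
  have "(Re c * Re a + Im c * Im a)^2 \<le> (Re c ^2 + Im c^2) * (Re a^2 + Im a^2)"
    using sum_squares_ge_zero[of "Re c * Im a - Im c * Re a" 0] 
    by (simp add: power2_eq_square algebra_simps)
  thus ?thesis by (simp add: cmod_power2)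
qed

lemma ravg2: "ravg (\<lambda>z. cmod z ^ 2) as c = cmod c ^ 2 + (\<Sum>a\<leftarrow>as. cmod a ^ 2)"
proof (induction as arbitrary: c)
  case Nil thus ?case by simp
next
  case (Cons a as)
  show ?case using Cons.IH[of "c + a"] Cons.IH[of "c - a"] by (simp add: cmod_sq_pm field_simps)
qed

lemma ravg4: "ravg (\<lambda>z. cmod z ^ 4) as c \<le>
   cmod c ^ 4 + 6 * cmod c ^ 2 * (\<Sum>a\<leftarrow>as. cmod a ^ 2) + 3 * (\<Sum>a\<leftarrow>as. cmod a ^ 2) ^ 2"
proof (induction as arbitrary: c)
  case Nil thus ?case by simp
next
  case (Cons a as)
  define A where "A = (\<Sum>a\<leftarrow>as. cmod a ^ 2)"
  define u where "u = cmod c ^ 2 + cmod a ^ 2"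
  define w where "w = 2 * (Re c * Re a + Im c * Im a)"
  have p: "cmod (c + a) ^ 2 = u + w" "cmod (c - a) ^ 2 = u - w"
    by (simp_all add: cmod_sq_pm u_def w_def)
  have p4: "cmod (c + a) ^ 4 = (u + w)^2" "cmod (c - a) ^ 4 = (u - w)^2"
    using p by (simp_all add: pow4)
  have ww: "w^2 \<le> 4 * cmod c ^ 2 * cmod a ^ 2"
  proof -
    have "w^2 = 4 * (Re c * Re a + Im c * Im a)^2" by (simp add: w_def power2_eq_square algebra_simps)
    thus ?thesis using cs_ineq[of c a] by simp
  qed
  have "ravg (\<lambda>z. cmod z ^ 4) (a # as) c = (ravg (\<lambda>z. cmod z ^ 4) as (c + a) + ravg (\<lambda>z. cmod z ^ 4) as (c - a)) / 2"
    by simp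
  also have "\<dots> \<le> ((u + w)^2 + 6 * (u + w) * A + 3 * A^2 + ((u - w)^2 + 6 * (u - w) * A + 3 * A^2)) / 2"
    using Cons.IH[of "c + a"] Cons.IH[of "c - a"] p p4 by (simp add: A_def)
  also have "\<dots> = u^2 + w^2 + 6 * u * A + 3 * A^2"
    by (simp add: power2_eq_square algebra_simps)
  also have "\<dots> \<le> u^2 + 4 * cmod c ^ 2 * cmod a ^ 2 + 6 * u * A + 3 * A^2"
    using ww by simp
  also have "\<dots> \<le> cmod c ^ 4 + 6 * cmod c ^ 2 * (cmod a ^ 2 + A) + 3 * (cmod a ^ 2 + A) ^ 2"
  proof -
    have "0 \<le> cmod a ^ 2 * cmod a ^ 2" by simp
    moreover have "0 \<le> A" unfolding A_def by (rule sum_list_nonneg) auto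
    ultimately show ?thesis
      by (simp add: u_def power2_eq_square algebra_simps power4_eq_xxxx)
  qed
  finally show ?case by (simp add: A_def)
qed

lemma pow_lower:
  fixes y M r :: real assumes "y \<ge> 0" "M > 0" "0 < r" "r \<le> 1"
  shows "y powr r \<ge> M powr (r - 1) * (y - y^2 / M)"
proof (cases "y \<le> M")
  case True
  show ?thesis
  proof (cases "y = 0")
    case True thus ?thesis by simp
  next
    case False
    hence y0: "y > 0" using assms by simp
    have "y powr (r - 1) \<ge> M powr (r - 1)"
      using True y0 assms by (intro powr_mono2') auto
    moreover have "y powr r = y powr (r - 1) * y"
      using y0 powr_add[of y "r - 1" 1] by simp
    ultimately have "y powr r \<ge> M powr (r - 1) * y"
      using y0 by (simp add: mult_right_mono)
    moreover have "M powr (r - 1) * (y - y^2 / M) \<le> M powr (r - 1) * y"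
      using assms by (intro mult_left_mono) auto
    ultimately show ?thesis by linarith
  qed
next
  case False
  hence "y - y^2 / M \<le> 0" using assms by (simp add: power2_eq_square field_simps)
  hence "M powr (r - 1) * (y - y^2 / M) \<le> 0" by (simp add: mult_nonneg_nonpos)
  thus ?thesis using powr_ge_zero[of y r] by linarith
qed

lemma sq_powr: fixes x p :: real assumes "x \<ge> 0" shows "(x ^ 2) powr (p / 2) = x powr p"
proof (cases "x = 0")
  case True thus ?thesis by simp
next
  case False
  hence "x > 0" using assms by simp
  hence "x ^ 2 = x powr 2" using powr_realpow[of x 2] by simp
  thus ?thesis by (simp add: powr_powr)
qed

lemma khintchine:
  assumes p: "0 < p" "p \<le> 2"
  shows "ravg (\<lambda>z. cmod z powr p) as 0 \<ge> (1/12) * (\<Sum>a\<leftarrow>as. cmod a ^ 2) powr (p/2)"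
proof -
  define A where "A = (\<Sum>a\<leftarrow>as. cmod a ^ 2)"
  define r where "r = p / 2"
  have r: "0 < r" "r \<le> 1" using p by (auto simp: r_def)
  have A0: "A \<ge> 0" unfolding A_def by (rule sum_list_nonneg) auto
  show ?thesis
  proof (cases "A = 0")
    case True thus ?thesis using ravg_nonneg[of "\<lambda>z. cmod z powr p" as 0] by (simp add: A_def)
  next
    case False
    hence Ap: "A > 0" using A0 by simp
    define M where "M = 6 * A"
    have M: "M > 0" using Ap by (simp add: M_def)
    have pt: "cmod z powr p \<ge> M powr (r - 1) * cmod z ^ 2 + (- (M powr (r - 1)) / M) * cmod z ^ 4" for z
    proof -
      have "cmod z powr p = (cmod z ^ 2) powr r" by (simp add: r_def sq_powr)
      also have "\<dots> \<ge> M powr (r - 1) * (cmod z ^ 2 - (cmod z ^ 2)^2 / M)"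
        using pow_lower[of "cmod z ^ 2" M r] M r by simp
      also have "M powr (r - 1) * (cmod z ^ 2 - (cmod z ^ 2)^2 / M) =
          M powr (r - 1) * cmod z ^ 2 + (- (M powr (r - 1)) / M) * cmod z ^ 4"
      proof -
        have "(cmod z ^ 2)^2 = cmod z ^ 4" by (simp only: power4_eq_xxxx power2_eq_square mult.assoc)
        thus ?thesis by (simp add: right_diff_distrib)
      qed
      finally show ?thesis .
    qed
    define m where "m = M powr (r - 1)"
    have m0: "m \<ge> 0" by (simp add: m_def)
    have s1: "ravg (\<lambda>z. cmod z powr p) as 0 \<ge> ravg (\<lambda>z. m * cmod z ^ 2 + (- m / M) * cmod z ^ 4) as 0"
      using pt by (intro ravg_mono) (simp add: m_def)
    have s2: "ravg (\<lambda>z. m * cmod z ^ 2 + (- m / M) * cmod z ^ 4) as 0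
      = m * A + (- m / M) * ravg (\<lambda>z. cmod z ^ 4) as 0"
      by (subst ravg_lin) (simp add: ravg2 A_def)
    have s3: "ravg (\<lambda>z. cmod z ^ 4) as 0 \<le> 3 * A^2" using ravg4[of as 0] by (simp add: A_def)
    have s4: "(- m / M) * ravg (\<lambda>z. cmod z ^ 4) as 0 \<ge> (- m / M) * (3 * A^2)"
      using s3 m0 M by (intro mult_left_mono_neg) auto
    have s5: "(- m / M) * (3 * A^2) = - (m * (A / 2))"
      using Ap by (simp add: M_def power2_eq_square)
    have s6: "m = 6 powr (r - 1) * A powr (r - 1)"
      using Ap by (simp add: m_def M_def powr_mult)
    have s7: "A powr (r - 1) * A = A powr r"
      using Ap powr_add[of A "r - 1" 1] by simp
    have s8: "m * (A / 2) = (6 powr (r - 1) / 2) * A powr r"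
      using s6 s7 by (simp add: mult.assoc[symmetric])
    have s9: "(6 powr (r - 1) / 2) * A powr r \<ge> (1/12) * A powr r"
    proof -
      have "6 powr (r - 1) \<ge> 6 powr (-1)" using r by (intro powr_mono) auto
      hence "6 powr (r - 1) / 2 \<ge> 1/12" by (simp add: powr_minus)
      thus ?thesis by (intro mult_right_mono) auto
    qed
    have "ravg (\<lambda>z. cmod z powr p) as 0 \<ge> (1/12) * A powr r"
    proof -
      have "(1/12) * A powr r \<le> m * (A / 2)" using s8 s9 by simp
      also have "\<dots> = m * A + (- m / M) * (3 * A^2)"
      proof -
        have "m * A + (- m / M) * (3 * A^2) = m * A + - (m * (A / 2))" by (simp only: s5)
        also have "\<dots> = m * (A / 2)" by (simp add: field_simps)
        finally show ?thesis by simp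
      qed
      also have "\<dots> \<le> m * A + (- m / M) * ravg (\<lambda>z. cmod z ^ 4) as 0" using s4 by simp
      also have "\<dots> \<le> ravg (\<lambda>z. cmod z powr p) as 0" using s1 s2 by simp
      finally show ?thesis .
    qed
    thus ?thesis by (simp add: A_def r_def)
  qed
qed


fun ravgF :: "((real \<Rightarrow> complex) \<Rightarrow> real) \<Rightarrow> (real \<Rightarrow> complex) list \<Rightarrow> (real \<Rightarrow> complex) \<Rightarrow> real" where
  "ravgF \<Phi> [] c = \<Phi> c"
| "ravgF \<Phi> (a # as) c = (ravgF \<Phi> as (\<lambda>x. c x + a x) + ravgF \<Phi> as (\<lambda>x. c x - a x)) / 2"

lemma ravg_swap:
  assumes p: "p > 0"
  shows "c \<in> Lp p \<Longrightarrow> set ws \<subseteq> Lp p \<Longrightarrow>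
    integrable lborel (\<lambda>x. ravg (\<lambda>z. cmod z powr p) (map (\<lambda>w. w x) ws) (c x)) \<and>
    (LINT x|lborel. ravg (\<lambda>z. cmod z powr p) (map (\<lambda>w. w x) ws) (c x)) =
      ravgF (\<lambda>h. LINT x|lborel. cmod (h x) powr p) ws c"
proof (induction ws arbitrary: c)
  case Nil thus ?case by (simp add: Lp_def)
next
  case (Cons a as)
  have a: "a \<in> Lp p" and as: "set as \<subseteq> Lp p" using Cons.prems by auto
  have c1: "(\<lambda>x. c x + a x) \<in> Lp p" using Lp_add[OF p Cons.prems(1) a] .
  have c2: "(\<lambda>x. c x - a x) \<in> Lp p" using Lp_diff[OF p Cons.prems(1) a] .
  note I1 = Cons.IH[OF c1 as] and I2 = Cons.IH[OF c2 as]
  show ?case using I1 I2 by simp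
qed

lemma ravgF_le:
  "(\<And>\<epsilon>::nat \<Rightarrow> bool. \<Phi> (\<lambda>x. c x + (\<Sum>i<length ws. if \<epsilon> i then (ws ! i) x else - ((ws ! i) x))) \<le> B)
   \<Longrightarrow> ravgF \<Phi> ws c \<le> B"
proof (induction ws arbitrary: c)
  case Nil thus ?case using Nil[of "\<lambda>_. True"] by simp
next
  case (Cons a as)
  have h1: "\<Phi> (\<lambda>x. (c x + a x) + (\<Sum>i<length as. if \<epsilon> i then (as ! i) x else - ((as ! i) x))) \<le> B" for \<epsilon>
  proof -
    define \<epsilon>' where "\<epsilon>' = (\<lambda>i. case i of 0 \<Rightarrow> True | Suc j \<Rightarrow> \<epsilon> j)"
    have "(\<lambda>x. c x + (\<Sum>i<length (a # as). if \<epsilon>' i then ((a # as) ! i) x else - (((a # as) ! i) x)))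
        = (\<lambda>x. (c x + a x) + (\<Sum>i<length as. if \<epsilon> i then (as ! i) x else - ((as ! i) x)))"
    proof (rule ext)
      fix x
      have "(\<Sum>i<length (a # as). if \<epsilon>' i then ((a # as) ! i) x else - (((a # as) ! i) x))
          = a x + (\<Sum>i<length as. if \<epsilon> i then (as ! i) x else - ((as ! i) x))"
        by (simp only: length_Cons sum.lessThan_Suc_shift, simp add: \<epsilon>'_def cong: if_cong)
      thus "c x + (\<Sum>i<length (a # as). if \<epsilon>' i then ((a # as) ! i) x else - (((a # as) ! i) x))
          = (c x + a x) + (\<Sum>i<length as. if \<epsilon> i then (as ! i) x else - ((as ! i) x))"
        by (simp add: add.assoc)
    qed
    thus ?thesis using Cons.prems[of \<epsilon>'] by simp
  qed
  have h2: "\<Phi> (\<lambda>x. (c x - a x) + (\<Sum>i<length as. if \<epsilon> i then (as ! i) x else - ((as ! i) x))) \<le> B" for \<epsilon>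
  proof -
    define \<epsilon>' where "\<epsilon>' = (\<lambda>i. case i of 0 \<Rightarrow> False | Suc j \<Rightarrow> \<epsilon> j)"
    have "(\<lambda>x. c x + (\<Sum>i<length (a # as). if \<epsilon>' i then ((a # as) ! i) x else - (((a # as) ! i) x)))
        = (\<lambda>x. (c x - a x) + (\<Sum>i<length as. if \<epsilon> i then (as ! i) x else - ((as ! i) x)))"
      by (rule ext) (simp only: length_Cons sum.lessThan_Suc_shift, simp add: \<epsilon>'_def cong: if_cong)
    thus ?thesis using Cons.prems[of \<epsilon>'] by simp
  qed
  have "ravgF \<Phi> as (\<lambda>x. c x + a x) \<le> B" by (rule Cons.IH) (rule h1)
  moreover have "ravgF \<Phi> as (\<lambda>x. c x - a x) \<le> B" by (rule Cons.IH) (rule h2)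
  ultimately show ?case by simp
qed


lemma cmod_expo[simp]: "cmod (expo s x) = 1"
  by (simp add: expo_def)

lemma expo_meas[measurable]: "expo s \<in> borel_measurable borel"
  unfolding expo_def by (intro borel_measurable_continuous_onI continuous_intros)

lemma expo_mult: "expo a x * expo b y = exp (2 * pi * \<i> * complex_of_real (a * x + b * y))"
  by (simp add: expo_def exp_add[symmetric] algebra_simps)

lemma transl_meas:
  fixes g :: "real \<Rightarrow> complex"
  assumes "g \<in> borel_measurable lborel"
  shows "(\<lambda>x. g (x - t)) \<in> borel_measurable lborel"
  by (rule measurable_compose[OF _ assms]) simp

lemma gabor_Lp:
  assumes p: "p > 0" and g: "g \<in> Lp p"
  shows "(\<lambda>x. expo s x * transl t g x) \<in> Lp p"
    and "Lp_norm p (\<lambda>x. expo s x * transl t g x) = Lp_norm p g"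
proof -
  have gm: "g \<in> borel_measurable lborel" using g by (simp add: Lp_def)
  have m: "(\<lambda>x. expo s x * transl t g x) \<in> borel_measurable lborel"
    unfolding transl_def using transl_meas[OF gm, of t] expo_meas[of s] by measurable
  have e: "(\<lambda>x. cmod (expo s x * transl t g x) powr p) = (\<lambda>x. (\<lambda>y. cmod (g y) powr p) (x - t))"
    by (simp add: norm_mult transl_def)
  have "integrable lborel (\<lambda>x. cmod (expo s x * transl t g x) powr p)"
    using transl_integrable_iff[of "\<lambda>y. cmod (g y) powr p" t] g by (simp add: Lp_def norm_mult transl_def)
  thus "(\<lambda>x. expo s x * transl t g x) \<in> Lp p"
    using m unfolding Lp_def by simp
  show "Lp_norm p (\<lambda>x. expo s x * transl t g x) = Lp_norm p g"
    unfolding Lp_norm_def using transl_integral[of "\<lambda>y. cmod (g y) powr p" t] by (simp add: norm_mult transl_def)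
qed

lemma expo_shift: "expo \<sigma> (-t) * expo (s0 + \<sigma>) x = expo s0 x * expo \<sigma> (x - t)"
  unfolding expo_mult by (simp add: algebra_simps)

lemma expo_zero[simp]: "expo 0 x = 1" by (simp add: expo_def)

lemma J_bound:
  assumes p: "p > 0" and g: "g \<in> Lp p" "Lp_norm p g = 1"
  shows "(LINT x|lborel. cmod (g x) powr p * cmod (expo \<sigma> x - 1) powr p) \<le> 2 powr p"
proof -
  have i1: "(LINT x|lborel. cmod (g x) powr p) = 1"
    using Lp_norm_powr[OF p, of g] g by simp
  have "(LINT x|lborel. cmod (g x) powr p * cmod (expo \<sigma> x - 1) powr p) \<le> (LINT x|lborel. 2 powr p * cmod (g x) powr p)"
  proof (rule integral_mono')
    show "integrable lborel (\<lambda>x. 2 powr p * cmod (g x) powr p)" using g by (auto simp: Lp_def)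
    fix x
    have "cmod (expo \<sigma> x - 1) \<le> 2" using norm_triangle_ineq4[of "expo \<sigma> x" 1] by simp
    hence "cmod (expo \<sigma> x - 1) powr p \<le> 2 powr p" using p by (intro powr_mono2) auto
    thus "cmod (g x) powr p * cmod (expo \<sigma> x - 1) powr p \<le> 2 powr p * cmod (g x) powr p"
      using mult_left_mono[of "cmod (expo \<sigma> x - 1) powr p" "2 powr p" "cmod (g x) powr p"]
      by (simp add: mult.commute)
  qed simp
  thus ?thesis using i1 by simp
qed

lemma delta_lemma:
  assumes p: "1 < p" and g: "g \<in> Lp p" "Lp_norm p g = 1"
    and sup: "(SUP \<sigma>\<in>{0<..<\<delta>}. LINT x|lborel. cmod (g x) powr p * cmod (expo \<sigma> x - 1) powr p) < 2 powr (- p)"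
    and \<sigma>: "0 \<le> \<sigma>" "\<sigma> < \<delta>"
  shows "Lp_norm p (\<lambda>x. expo \<sigma> (-t) * (expo (s0 + \<sigma>) x * transl t g x) - expo s0 x * transl t g x) \<le> 1/2"
proof -
  have p0: "p > 0" using p by simp
  define J where "J = (\<lambda>y. cmod (g y) powr p * cmod (expo \<sigma> y - 1) powr p)"
  have pt: "cmod (expo \<sigma> (-t) * (expo (s0 + \<sigma>) x * transl t g x) - expo s0 x * transl t g x) powr p = J (x - t)" for x
  proof -
    have "expo \<sigma> (-t) * (expo (s0 + \<sigma>) x * transl t g x) - expo s0 x * transl t g x
        = expo s0 x * (g (x - t) * (expo \<sigma> (x - t) - 1))"
    proof -
      have "expo \<sigma> (-t) * (expo (s0 + \<sigma>) x * transl t g x) = (expo \<sigma> (-t) * expo (s0 + \<sigma>) x) * g (x - t)"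
        by (simp add: transl_def mult.assoc)
      also have "\<dots> = expo s0 x * expo \<sigma> (x - t) * g (x - t)" by (simp only: expo_shift)
      finally show ?thesis by (simp add: transl_def algebra_simps)
    qed
    hence "cmod (expo \<sigma> (-t) * (expo (s0 + \<sigma>) x * transl t g x) - expo s0 x * transl t g x)
        = cmod (g (x - t)) * cmod (expo \<sigma> (x - t) - 1)"
      by (simp add: norm_mult)
    thus ?thesis by (simp add: J_def powr_mult)
  qed
  have int: "(LINT x|lborel. cmod (expo \<sigma> (-t) * (expo (s0 + \<sigma>) x * transl t g x) - expo s0 x * transl t g x) powr p)
       = (LINT x|lborel. J x)"
    using transl_integral[of J t] by (simp add: pt)
  have JJ: "(LINT x|lborel. J x) \<le> 2 powr (- p)"
  proof (cases "\<sigma> = 0")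
    case True thus ?thesis by (simp add: J_def)
  next
    case False
    hence "\<sigma> \<in> {0<..<\<delta>}" using \<sigma> by auto
    moreover have "bdd_above ((\<lambda>\<sigma>. LINT x|lborel. cmod (g x) powr p * cmod (expo \<sigma> x - 1) powr p) ` {0<..<\<delta>})"
      using J_bound[OF p0 g] by (intro bdd_aboveI2) auto
    ultimately have "(LINT x|lborel. J x) \<le> (SUP \<sigma>\<in>{0<..<\<delta>}. LINT x|lborel. cmod (g x) powr p * cmod (expo \<sigma> x - 1) powr p)"
      unfolding J_def by (rule cSUP_upper)
    thus ?thesis using sup by simp
  qed
  have "Lp_norm p (\<lambda>x. expo \<sigma> (-t) * (expo (s0 + \<sigma>) x * transl t g x) - expo s0 x * transl t g x)
      = (LINT x|lborel. J x) powr (1/p)"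
    unfolding Lp_norm_def int ..
  also have "\<dots> \<le> (2 powr (- p)) powr (1/p)"
    using JJ p0 by (intro powr_mono2) (auto simp: J_def intro!: integral_nonneg_AE)
  also have "\<dots> = 2 powr (- p * (1/p))" by (rule powr_powr)
  also have "- p * (1/p) = -1" using p0 by simp
  also have "(2::real) powr (-1) = 1/2" by (simp add: powr_minus)
  finally show ?thesis .
qed


definition sgnc :: "complex \<Rightarrow> complex" where
  "sgnc z = (if z = 0 then 1 else cnj z / complex_of_real (cmod z))"

lemma sgnc_mult: "sgnc z * z = complex_of_real (cmod z)"
proof (cases "z = 0")
  case False
  have "cnj z * z = complex_of_real (cmod z ^ 2)" using complex_norm_square[of z] by (simp add: mult.commute)
  thus ?thesis using False by (simp add: sgnc_def power2_eq_square)
qed (simp add: sgnc_def)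

lemma cmod_sgnc[simp]: "cmod (sgnc z) = 1"
  by (simp add: sgnc_def norm_divide)

lemma coef_bound:
  assumes p: "1 < p" and g: "g \<in> Lp p" "Lp_norm p g = 1"
    and sup: "(SUP \<sigma>\<in>{0<..<\<delta>}. LINT x|lborel. cmod (g x) powr p * cmod (expo \<sigma> x - 1) powr p) < 2 powr (- p)"
    and F: "finite F" "\<And>s. s \<in> F \<Longrightarrow> of_int l * \<delta> \<le> s \<and> s < (of_int l + 1) * \<delta>"
  shows "(\<Sum>s\<in>F. cmod (c s)) \<le>
    2 * Lp_norm p (\<lambda>x. \<Sum>s\<in>F. (expo (s - of_int l * \<delta>) (-t) * sgnc (c s)) * c s * (expo s x * transl t g x))"
proof -
  have p0: "p > 0" and p1: "p \<ge> 1" using p by auto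
  define s0 where "s0 = of_int l * \<delta>"
  define \<sigma> where "\<sigma> = (\<lambda>s. s - s0)"
  have \<sigma>r: "0 \<le> \<sigma> s" "\<sigma> s < \<delta>" if "s \<in> F" for s
    using F(2)[OF that] by (auto simp: \<sigma>_def s0_def algebra_simps)
  define u where "u = (\<lambda>s x. expo s x * transl t g x)"
  define v where "v = (\<lambda>x. expo s0 x * transl t g x)"
  define B where "B = (\<lambda>s x. expo (\<sigma> s) (-t) * (expo (s0 + \<sigma> s) x * transl t g x) - v x)"
  define W where "W = (\<lambda>x. \<Sum>s\<in>F. (expo (s - of_int l * \<delta>) (-t) * sgnc (c s)) * c s * (expo s x * transl t g x))"
  define D where "D = (\<lambda>x. \<Sum>s\<in>F. complex_of_real (cmod (c s)) * B s x)"
  have uL: "u s \<in> Lp p" for s unfolding u_def using gabor_Lp[OF p0 g(1)] by simp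
  have vL: "v \<in> Lp p" and vn: "Lp_norm p v = 1" unfolding v_def using gabor_Lp[OF p0 g(1)] g(2) by auto
  have BL: "B s \<in> Lp p" for s
    unfolding B_def using gabor_Lp[OF p0 g(1)] vL by (intro Lp_diff Lp_cmult p0) auto
  have Bn: "Lp_norm p (B s) \<le> 1/2" if "s \<in> F" for s
    unfolding B_def v_def using delta_lemma[OF p g sup \<sigma>r[OF that]] by simp
  have WL: "W \<in> Lp p" unfolding W_def using gabor_Lp[OF p0 g(1)]
    by (intro Lp_sum Lp_cmult p0 F(1)) auto
  have DL: "D \<in> Lp p" unfolding D_def using BL by (intro Lp_sum Lp_cmult p0 F(1)) auto
  have eq: "W x - D x = complex_of_real (\<Sum>s\<in>F. cmod (c s)) * v x" for x
  proof -
    have "W x = (\<Sum>s\<in>F. complex_of_real (cmod (c s)) * (expo (\<sigma> s) (-t) * (expo (s0 + \<sigma> s) x * transl t g x)))"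
      unfolding W_def
    proof (rule sum.cong[OF refl])
      fix s assume "s \<in> F"
      have "(expo (s - of_int l * \<delta>) (-t) * sgnc (c s)) * c s * (expo s x * transl t g x)
          = expo (s - of_int l * \<delta>) (-t) * (sgnc (c s) * c s) * (expo s x * transl t g x)"
        by (simp only: mult.assoc)
      thus "(expo (s - of_int l * \<delta>) (-t) * sgnc (c s)) * c s * (expo s x * transl t g x)
          = complex_of_real (cmod (c s)) * (expo (\<sigma> s) (-t) * (expo (s0 + \<sigma> s) x * transl t g x))"
        by (simp add: sgnc_mult \<sigma>_def s0_def)
    qed
    thus ?thesis unfolding D_def B_def
      by (simp add: sum_subtractf[symmetric] right_diff_distrib sum_distrib_right)
  qed
  have "Lp_norm p (\<lambda>x. complex_of_real (\<Sum>s\<in>F. cmod (c s)) * v x) = cmod (complex_of_real (\<Sum>s\<in>F. cmod (c s))) * Lp_norm p v"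
    by (rule Lp_norm_cmult[OF p0])
  also have "cmod (complex_of_real (\<Sum>s\<in>F. cmod (c s))) = (\<Sum>s\<in>F. cmod (c s))"
    by (simp only: norm_of_real) (simp add: sum_nonneg)
  finally have "(\<Sum>s\<in>F. cmod (c s)) = Lp_norm p (\<lambda>x. complex_of_real (\<Sum>s\<in>F. cmod (c s)) * v x)"
    using vn by simp
  also have "\<dots> = Lp_norm p (\<lambda>x. W x - D x)" by (simp add: eq)
  also have "\<dots> \<le> Lp_norm p W + Lp_norm p D" by (rule minkowski_diff[OF p1 WL DL])
  also have "Lp_norm p D \<le> (\<Sum>s\<in>F. Lp_norm p (\<lambda>x. complex_of_real (cmod (c s)) * B s x))"
    unfolding D_def using BL by (intro minkowski_sum[OF p1 F(1)] Lp_cmult p0) auto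
  also have "\<dots> = (\<Sum>s\<in>F. cmod (c s) * Lp_norm p (B s))"
    using p0 by (simp add: Lp_norm_cmult)
  also have "\<dots> \<le> (\<Sum>s\<in>F. cmod (c s) * (1/2))"
    using Bn by (intro sum_mono mult_left_mono) auto
  finally have "(\<Sum>s\<in>F. cmod (c s)) \<le> Lp_norm p W + (\<Sum>s\<in>F. cmod (c s)) / 2"
    by (simp add: sum_divide_distrib)
  thus ?thesis unfolding W_def by simp
qed


lemma uncond_finite_support:
  assumes p: "p > 0" and conv: "Lp_uncond_conv p I c u y" and y: "y \<in> Lp p"
    and Q: "finite Q" "Q \<subseteq> I" and z: "\<And>i. i \<in> I - Q \<Longrightarrow> c i = 0"
    and uL: "\<And>i. i \<in> Q \<Longrightarrow> u i \<in> Lp p"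
  shows "Lp_norm p (\<lambda>x. \<Sum>i\<in>Q. c i * u i x) = Lp_norm p y"
proof -
  define S where "S = (\<lambda>x. \<Sum>i\<in>Q. c i * u i x)"
  have SL: "S \<in> Lp p" unfolding S_def using uL by (intro Lp_sum Lp_cmult p Q(1)) auto
  have hL: "(\<lambda>x. y x - S x) \<in> Lp p" by (rule Lp_diff[OF p y SL])
  have small: "Lp_norm p (\<lambda>x. y x - S x) < e" if e: "e > 0" for e
  proof -
    have "\<exists>F0. finite F0 \<and> F0 \<subseteq> I \<and> (\<forall>F. finite F \<and> F0 \<subseteq> F \<and> F \<subseteq> I \<longrightarrow>
           Lp_norm p (\<lambda>x. y x - (\<Sum>i\<in>F. c i * u i x)) < e)"
      using conv[unfolded Lp_uncond_conv_def, rule_format, OF e] .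
    then obtain F0 where F0: "finite F0" "F0 \<subseteq> I"
      and H: "\<And>F. finite F \<and> F0 \<subseteq> F \<and> F \<subseteq> I \<Longrightarrow> Lp_norm p (\<lambda>x. y x - (\<Sum>i\<in>F. c i * u i x)) < e"
      by blast
    have fin: "finite (F0 \<union> Q)" using F0 Q by auto
    have "(\<Sum>i\<in>F0 \<union> Q. c i * u i x) = S x" for x
      unfolding S_def
    proof (rule sum.mono_neutral_right[OF fin])
      show "Q \<subseteq> F0 \<union> Q" by blast
      show "\<forall>i\<in>F0 \<union> Q - Q. c i * u i x = 0"
      proof
        fix i assume "i \<in> F0 \<union> Q - Q"
        hence "i \<in> I - Q" using F0(2) by auto
        hence "c i = 0" by (rule z)
        thus "c i * u i x = 0" by simp
      qed
    qed
    moreover have "Lp_norm p (\<lambda>x. y x - (\<Sum>i\<in>F0 \<union> Q. c i * u i x)) < e"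
      using fin F0 Q by (intro H) blast
    ultimately show ?thesis by simp
  qed
  have "Lp_norm p (\<lambda>x. y x - S x) \<le> 0"
  proof (rule ccontr)
    assume "\<not> ?thesis"
    hence "Lp_norm p (\<lambda>x. y x - S x) > 0" by simp
    from small[OF this] show False by simp
  qed
  hence "Lp_norm p (\<lambda>x. y x - S x) = 0" using Lp_norm_nonneg[of p] by (simp add: order_antisym)
  hence "AE x in lborel. y x - S x = 0" by (rule Lp_norm_zero_AE[OF p hL])
  hence "AE x in lborel. S x = y x" by eventually_elim simp
  hence "Lp_norm p S = Lp_norm p y"
    by (rule Lp_norm_cong_AE) (use SL y in \<open>auto simp: Lp_def\<close>)
  thus ?thesis by (simp add: S_def)
qed

lemma sq_powr2: "(x::real) \<ge> 0 \<Longrightarrow> (x powr a) ^ 2 = x powr (2 * a)"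
proof (cases "x = 0")
  case False
  assume "x \<ge> 0"
  hence "x > 0" using False by simp
  have "x powr (2 * a) = x powr (a + a)" by simp
  also have "\<dots> = x powr a * x powr a" by (rule powr_add)
  finally show ?thesis by (simp add: power2_eq_square)
qed simp

lemma combine:
  fixes W :: "'k \<Rightarrow> real \<Rightarrow> complex"
  assumes p: "1 < p" "p \<le> 2" and P: "finite P" and WL: "\<And>k. k \<in> P \<Longrightarrow> W k \<in> Lp p"
    and bound: "\<And>\<epsilon>::'k \<Rightarrow> bool. (LINT x|lborel. cmod (\<Sum>k\<in>P. if \<epsilon> k then W k x else - W k x) powr p) \<le> R"
  shows "(\<Sum>k\<in>P. Lp_norm p (W k) ^ 2) \<le> (12 * R) powr (2/p)"
proof -
  have p0: "p > 0" using p by simp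
  obtain xs where xs: "set xs = P" "distinct xs" using finite_distinct_list[OF P] by blast
  define n where "n = length xs"
  define ws where "ws = map W xs"
  define \<Phi> where "\<Phi> = (\<lambda>h::real \<Rightarrow> complex. LINT x|lborel. cmod (h x) powr p)"
  have bij: "bij_betw ((!) xs) {..<n} P" using bij_betw_nth[OF xs(2) _ xs(1)[symmetric]] n_def by simp
  have a: "\<Phi> (\<lambda>x. 0 + (\<Sum>i<length ws. if \<epsilon> i then (ws ! i) x else - ((ws ! i) x))) \<le> R" for \<epsilon> :: "nat \<Rightarrow> bool"
  proof -
    define \<epsilon>' where "\<epsilon>' = (\<lambda>k. \<epsilon> (the_inv_into {..<n} ((!) xs) k))"
    have e': "\<epsilon>' (xs ! i) = \<epsilon> i" if "i < n" for i
      unfolding \<epsilon>'_def using the_inv_into_f_f[OF bij_betw_imp_inj_on[OF bij], of i] that by simp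
    have "(\<Sum>i<length ws. if \<epsilon> i then (ws ! i) x else - ((ws ! i) x))
        = (\<Sum>i<n. (\<lambda>k. if \<epsilon>' k then W k x else - W k x) (xs ! i))" for x
      by (rule sum.cong) (auto simp: ws_def n_def e')
    also have "\<dots> x = (\<Sum>k\<in>P. if \<epsilon>' k then W k x else - W k x)" for x
      by (rule sum.reindex_bij_betw[OF bij])
    finally show ?thesis using bound[of \<epsilon>'] by (simp add: \<Phi>_def)
  qed
  have wsL: "set ws \<subseteq> Lp p" using WL xs by (auto simp: ws_def)
  have b: "ravgF \<Phi> ws (\<lambda>x. 0) \<le> R" by (rule ravgF_le) (rule a)
  have c: "integrable lborel (\<lambda>x. ravg (\<lambda>z. cmod z powr p) (map (\<lambda>w. w x) ws) 0)"
    "(LINT x|lborel. ravg (\<lambda>z. cmod z powr p) (map (\<lambda>w. w x) ws) 0) = ravgF \<Phi> ws (\<lambda>x. 0)"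
    using ravg_swap[OF p0 Lp_zero wsL] by (simp_all add: \<Phi>_def)
  define F where "F = (\<lambda>k x. cmod (W k x) ^ 2)"
  have d: "(1/12) * (\<Sum>k\<in>P. F k x) powr (p/2) \<le> ravg (\<lambda>z. cmod z powr p) (map (\<lambda>w. w x) ws) 0" for x
  proof -
    have "(\<Sum>a\<leftarrow>map (\<lambda>w. w x) ws. cmod a ^ 2) = (\<Sum>k\<in>P. F k x)"
      using xs by (simp add: ws_def F_def o_def sum_list_distinct_conv_sum_set)
    thus ?thesis using khintchine[of p "map (\<lambda>w. w x) ws"] p by simp
  qed
  have r: "0 < p/2" "p/2 \<le> 1" using p by auto
  have Fm: "F k \<in> borel_measurable lborel" if "k \<in> P" for k
  proof -
    have [measurable]: "W k \<in> borel_measurable borel" using WL[OF that] by (simp add: Lp_def)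
    show ?thesis unfolding F_def by measurable
  qed
  have Fr: "(\<lambda>x. F k x powr (p/2)) = (\<lambda>x. cmod (W k x) powr p)" for k
    by (simp add: F_def sq_powr)
  have e: "integrable lborel (\<lambda>x. (\<Sum>k\<in>P. F k x) powr (p/2)) \<and>
         (\<Sum>k\<in>P. NN (p/2) (F k)) \<le> NN (p/2) (\<lambda>x. \<Sum>k\<in>P. F k x)"
    using WL by (intro rev_mink_sum[OF r P] Fm) (auto simp: F_def sq_powr Lp_def)
  have f: "NN (p/2) (F k) = Lp_norm p (W k) ^ 2" for k
  proof -
    have "Lp_norm p (W k) ^ 2 = (LINT x|lborel. cmod (W k x) powr p) powr (2 * (1/p))"
      unfolding Lp_norm_def by (rule sq_powr2) (rule integral_nonneg_AE, simp)
    thus ?thesis by (simp add: NN_def Fr)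
  qed
  have g: "(LINT x|lborel. (\<Sum>k\<in>P. F k x) powr (p/2)) \<le> 12 * R"
  proof -
    have "(LINT x|lborel. (\<Sum>k\<in>P. F k x) powr (p/2)) \<le> (LINT x|lborel. 12 * ravg (\<lambda>z. cmod z powr p) (map (\<lambda>w. w x) ws) 0)"
      using e c(1) d by (intro integral_mono) (auto simp: field_simps)
    also have "\<dots> = 12 * ravgF \<Phi> ws (\<lambda>x. 0)" using c by simp
    also have "\<dots> \<le> 12 * R" using b by simp
    finally show ?thesis .
  qed
  have "(\<Sum>k\<in>P. Lp_norm p (W k) ^ 2) \<le> NN (p/2) (\<lambda>x. \<Sum>k\<in>P. F k x)" using e f by simp
  also have "\<dots> \<le> (12 * R) powr (2/p)"
  proof -
    have "1 / (p / 2) = 2 / p" by simp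
    moreover have "0 \<le> (LINT x|lborel. (\<Sum>k\<in>P. F k x) powr (p/2))" by (rule integral_nonneg_AE) simp
    ultimately show ?thesis unfolding NN_def using g p0 by (metis powr_mono2 less_imp_le zero_le_divide_iff zero_le_numeral)
  qed
  finally show ?thesis .
qed


lemma floor_div_eq:
  fixes s \<delta> :: real assumes "\<delta> > 0" "of_int l * \<delta> \<le> s" "s < (of_int l + 1) * \<delta>"
  shows "\<lfloor>s / \<delta>\<rfloor> = l"
proof -
  have "of_int l \<le> s / \<delta>" using assms by (simp add: le_divide_eq)
  moreover have "s / \<delta> < of_int l + 1" using assms by (simp add: divide_less_eq)
  ultimately show ?thesis by (simp add: floor_eq_iff)
qed

lemma core:
  fixes g :: "real \<Rightarrow> complex" and T S :: "real set"
    and gs :: "real \<times> real \<Rightarrow> (real \<Rightarrow> complex) \<Rightarrow> complex"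
    and P :: "(real \<times> int) set" and F :: "real \<times> int \<Rightarrow> real set"
  assumes p: "1 < p" "p < 2"
    and g: "g \<in> Lp p" "Lp_norm p g = 1"
    and fr: "Lp_uncond_frame p (T \<times> S) (\<lambda>(t, s) x. expo s x * transl t g x) gs K"
    and \<delta>: "\<delta> > 0"
    and sup: "(SUP \<sigma>\<in>{0<..<\<delta>}. LINT x|lborel. cmod (g x) powr p * cmod (expo \<sigma> x - 1) powr p) < 2 powr (- p)"
    and f: "f \<in> Lp p"
    and P: "finite P" "P \<subseteq> T \<times> UNIV"
    and Fk: "\<And>k. k \<in> P \<Longrightarrow> finite (F k) \<and> F k \<subseteq> {s\<in>S. of_int (snd k) * \<delta> \<le> s \<and> s < (of_int (snd k) + 1) * \<delta>}"
  shows "(\<Sum>k\<in>P. (\<Sum>s\<in>F k. cmod (gs (fst k, s) f))^2) \<le> 4 * (12 * (K * Lp_norm p f) powr p) powr (2/p)"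
proof -
  have p0: "p > 0" using p by simp
  define U where "U = (\<lambda>(t::real, s::real) x. expo s x * transl t g x)"
  define c where "c = (\<lambda>t s. gs (t, s) f)"
  define lof where "lof = (\<lambda>s. \<lfloor>s / \<delta>\<rfloor>)"
  have lofF: "lof s = snd k" if "k \<in> P" "s \<in> F k" for k s
    using Fk[OF that(1)] that(2) \<delta> unfolding lof_def by (intro floor_div_eq) auto
  define \<alpha> where "\<alpha> = (\<lambda>t s. expo (s - of_int (lof s) * \<delta>) (-t) * sgnc (c t s))"
  have c\<alpha>: "cmod (\<alpha> t s) = 1" for t s by (simp add: \<alpha>_def norm_mult)
  define W where "W = (\<lambda>k x. \<Sum>s\<in>F k. \<alpha> (fst k) s * c (fst k) s * (expo s x * transl (fst k) g x))"
  have WL: "W k \<in> Lp p" if "k \<in> P" for k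
    unfolding W_def using gabor_Lp[OF p0 g(1)] Fk[OF that] by (intro Lp_sum Lp_cmult p0) auto
  have step1: "(\<Sum>s\<in>F k. cmod (c (fst k) s)) \<le> 2 * Lp_norm p (W k)" if k: "k \<in> P" for k
  proof -
    have "(\<Sum>s\<in>F k. cmod (c (fst k) s)) \<le>
      2 * Lp_norm p (\<lambda>x. \<Sum>s\<in>F k. (expo (s - of_int (snd k) * \<delta>) (- fst k) * sgnc (c (fst k) s)) * c (fst k) s * (expo s x * transl (fst k) g x))"
      by (rule coef_bound[OF p(1) g sup]) (use Fk[OF k] in auto)
    also have "(\<lambda>x. \<Sum>s\<in>F k. (expo (s - of_int (snd k) * \<delta>) (- fst k) * sgnc (c (fst k) s)) * c (fst k) s * (expo s x * transl (fst k) g x)) = W k"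
      unfolding W_def \<alpha>_def by (intro ext sum.cong refl) (simp add: lofF[OF k])
    finally show ?thesis .
  qed
  have step2: "(LINT x|lborel. cmod (\<Sum>k\<in>P. if \<epsilon> k then W k x else - W k x) powr p) \<le> (K * Lp_norm p f) powr p"
    for \<epsilon> :: "real \<times> int \<Rightarrow> bool"
  proof -
    define \<theta> where "\<theta> = (\<lambda>(t, s). if (t, lof s) \<in> P \<and> s \<in> F (t, lof s) then (if \<epsilon> (t, lof s) then 1 else -1) * \<alpha> t s else 0)"
    have \<theta>1: "cmod (\<theta> i) \<le> 1" for i
      by (cases i) (auto simp: \<theta>_def norm_mult c\<alpha>)
    obtain y where y: "y \<in> Lp p" "Lp_uncond_conv p (T \<times> S) (\<lambda>i. \<theta> i * gs i f) U y" "Lp_norm p y \<le> K * Lp_norm p f"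
      using fr f \<theta>1 unfolding Lp_uncond_frame_def U_def by blast
    define Q where "Q = {(t, s). (t, lof s) \<in> P \<and> s \<in> F (t, lof s)}"
    have Qim: "Q = (\<lambda>(k, s). (fst k, s)) ` (SIGMA k:P. F k)"
    proof
      show "Q \<subseteq> (\<lambda>(k, s). (fst k, s)) ` (SIGMA k:P. F k)"
      proof
        fix i assume "i \<in> Q"
        then obtain t s where i: "i = (t, s)" "(t, lof s) \<in> P" "s \<in> F (t, lof s)" by (auto simp: Q_def)
        hence "((t, lof s), s) \<in> (SIGMA k:P. F k)" by auto
        thus "i \<in> (\<lambda>(k, s). (fst k, s)) ` (SIGMA k:P. F k)" using i(1) by force
      qed
      show "(\<lambda>(k, s). (fst k, s)) ` (SIGMA k:P. F k) \<subseteq> Q"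
      proof
        fix i assume "i \<in> (\<lambda>(k, s). (fst k, s)) ` (SIGMA k:P. F k)"
        then obtain k s where ks: "k \<in> P" "s \<in> F k" "i = (fst k, s)" by auto
        have "(fst k, lof s) = k" using lofF[OF ks(1,2)] by (cases k) auto
        thus "i \<in> Q" using ks by (auto simp: Q_def)
      qed
    qed
    have inj: "inj_on (\<lambda>(k, s). (fst k, s)) (SIGMA k:P. F k)"
    proof (rule inj_onI)
      fix a b assume a: "a \<in> (SIGMA k:P. F k)" and b: "b \<in> (SIGMA k:P. F k)"
        and e: "(\<lambda>(k, s). (fst k, s)) a = (\<lambda>(k, s). (fst k, s)) b"
      obtain k s where ak: "a = (k, s)" "k \<in> P" "s \<in> F k" using a by auto
      obtain k' s' where bk: "b = (k', s')" "k' \<in> P" "s' \<in> F k'" using b by auto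
      have "fst k = fst k'" "s = s'" using e ak bk by auto
      moreover have "snd k = snd k'" using lofF[OF ak(2,3)] lofF[OF bk(2,3)] \<open>s = s'\<close> by simp
      ultimately show "a = b" using ak bk by (simp add: prod_eq_iff)
    qed
    have finS: "finite (SIGMA k:P. F k)" using P(1) Fk by (intro finite_SigmaI) auto
    have Qfin: "finite Q" unfolding Qim using finS by simp
    have QTS: "Q \<subseteq> T \<times> S"
    proof
      fix i assume "i \<in> Q"
      then obtain k s where ks: "k \<in> P" "s \<in> F k" "i = (fst k, s)" unfolding Qim by auto
      thus "i \<in> T \<times> S" using P(2) Fk[OF ks(1)] by (cases k) auto
    qed
    have z: "\<theta> i * gs i f = 0" if "i \<in> T \<times> S - Q" for i
      using that by (cases i) (auto simp: \<theta>_def Q_def)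
    have UL: "U i \<in> Lp p" for i unfolding U_def using gabor_Lp[OF p0 g(1)] by (cases i) simp
    have normeq: "Lp_norm p (\<lambda>x. \<Sum>i\<in>Q. (\<theta> i * gs i f) * U i x) = Lp_norm p y"
      by (rule uncond_finite_support[OF p0 y(2) y(1) Qfin QTS]) (use z UL in auto)
    have sumeq: "(\<Sum>i\<in>Q. (\<theta> i * gs i f) * U i x) = (\<Sum>k\<in>P. if \<epsilon> k then W k x else - W k x)" for x
    proof -
      have "(\<Sum>i\<in>Q. (\<theta> i * gs i f) * U i x) = (\<Sum>ks\<in>(SIGMA k:P. F k). (\<lambda>i. (\<theta> i * gs i f) * U i x) ((\<lambda>(k, s). (fst k, s)) ks))"
        unfolding Qim using sum.reindex[OF inj, of "\<lambda>i. (\<theta> i * gs i f) * U i x"] by (simp only: o_def)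
      also have "\<dots> = (\<Sum>k\<in>P. \<Sum>s\<in>F k. (\<theta> (fst k, s) * gs (fst k, s) f) * U (fst k, s) x)"
        by (subst sum.Sigma[OF P(1)]) (use Fk in \<open>auto simp: split_beta\<close>)
      also have "\<dots> = (\<Sum>k\<in>P. if \<epsilon> k then W k x else - W k x)"
      proof (rule sum.cong[OF refl])
        fix k assume k: "k \<in> P"
        have th: "\<theta> (fst k, s) = (if \<epsilon> k then 1 else -1) * \<alpha> (fst k) s" if "s \<in> F k" for s
        proof -
          have "(fst k, lof s) = k" using lofF[OF k that] by (cases k) auto
          thus ?thesis using k that by (simp add: \<theta>_def)
        qed
        have "(\<Sum>s\<in>F k. (\<theta> (fst k, s) * gs (fst k, s) f) * U (fst k, s) x)
            = (\<Sum>s\<in>F k. (if \<epsilon> k then 1 else -1) * (\<alpha> (fst k) s * c (fst k) s * (expo s x * transl (fst k) g x)))"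
          by (rule sum.cong[OF refl]) (simp add: th U_def c_def mult.assoc)
        also have "\<dots> = (if \<epsilon> k then 1 else -1) * W k x"
          unfolding W_def by (simp add: sum_distrib_left)
        finally show "(\<Sum>s\<in>F k. (\<theta> (fst k, s) * gs (fst k, s) f) * U (fst k, s) x) = (if \<epsilon> k then W k x else - W k x)"
          by simp
      qed
      finally show ?thesis .
    qed
    have "Lp_norm p (\<lambda>x. \<Sum>k\<in>P. if \<epsilon> k then W k x else - W k x) \<le> K * Lp_norm p f"
      using normeq y(3) by (simp add: sumeq)
    hence "Lp_norm p (\<lambda>x. \<Sum>k\<in>P. if \<epsilon> k then W k x else - W k x) powr p \<le> (K * Lp_norm p f) powr p"
      using p0 by (intro powr_mono2) (auto simp: Lp_norm_nonneg)
    thus ?thesis by (simp add: Lp_norm_powr[OF p0])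
  qed
  have step3: "(\<Sum>k\<in>P. Lp_norm p (W k) ^ 2) \<le> (12 * (K * Lp_norm p f) powr p) powr (2/p)"
    by (rule combine[OF p(1) _ P(1)]) (use p WL step2 in auto)
  have "(\<Sum>k\<in>P. (\<Sum>s\<in>F k. cmod (gs (fst k, s) f))^2) \<le> (\<Sum>k\<in>P. 4 * Lp_norm p (W k) ^ 2)"
  proof (rule sum_mono)
    fix k assume k: "k \<in> P"
    have "(\<Sum>s\<in>F k. cmod (gs (fst k, s) f))^2 \<le> (2 * Lp_norm p (W k))^2"
      using step1[OF k] by (intro power_mono) (auto simp: c_def intro: sum_nonneg)
    thus "(\<Sum>s\<in>F k. cmod (gs (fst k, s) f))^2 \<le> 4 * Lp_norm p (W k) ^ 2" by (simp add: power_mult_distrib)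
  qed
  also have "\<dots> = 4 * (\<Sum>k\<in>P. Lp_norm p (W k) ^ 2)" by (simp add: sum_distrib_left)
  also have "\<dots> \<le> 4 * (12 * (K * Lp_norm p f) powr p) powr (2/p)" using step3 by simp
  finally show ?thesis .
qed


lemma eps_sq:
  fixes Y :: "'k \<Rightarrow> real" and \<sigma> :: "'k \<Rightarrow> 'f \<Rightarrow> real"
  assumes P: "finite P" and Y0: "\<And>k. k \<in> P \<Longrightarrow> 0 \<le> Y k"
    and approx: "\<And>k \<eta>. k \<in> P \<Longrightarrow> \<eta> > 0 \<Longrightarrow> \<exists>F\<in>A k. Y k - \<eta> < \<sigma> k F \<and> 0 \<le> \<sigma> k F \<and> \<sigma> k F \<le> Y k"
    and bound: "\<And>Fs. (\<forall>k\<in>P. Fs k \<in> A k) \<Longrightarrow> (\<Sum>k\<in>P. (\<sigma> k (Fs k))^2) \<le> B"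
  shows "(\<Sum>k\<in>P. (Y k)^2) \<le> B"
proof (rule field_le_epsilon)
  fix e :: real assume e: "e > 0"
  define Z where "Z = (\<Sum>k\<in>P. 2 * Y k + 1)"
  have Z0: "Z \<ge> 0" unfolding Z_def using Y0 by (intro sum_nonneg) auto
  define \<eta> where "\<eta> = min 1 (e / (Z + 1))"
  have \<eta>: "\<eta> > 0" "\<eta> \<le> 1" using e Z0 by (auto simp: \<eta>_def)
  have "\<forall>k\<in>P. \<exists>F\<in>A k. Y k - \<eta> < \<sigma> k F \<and> 0 \<le> \<sigma> k F \<and> \<sigma> k F \<le> Y k"
    using approx \<eta> by blast
  then obtain Fs where Fs: "\<And>k. k \<in> P \<Longrightarrow> Fs k \<in> A k \<and> Y k - \<eta> < \<sigma> k (Fs k) \<and> 0 \<le> \<sigma> k (Fs k) \<and> \<sigma> k (Fs k) \<le> Y k"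
    by metis
  have pt: "(Y k)^2 \<le> (\<sigma> k (Fs k))^2 + \<eta> * (2 * Y k + 1)" if k: "k \<in> P" for k
  proof -
    define s where "s = \<sigma> k (Fs k)"
    have s: "Y k < s + \<eta>" "0 \<le> s" "s \<le> Y k" using Fs[OF k] by (auto simp: s_def)
    have "(Y k)^2 \<le> (s + \<eta>)^2" using s Y0[OF k] by (intro power_mono) auto
    also have "\<dots> = s^2 + \<eta> * (2 * s + \<eta>)" by (simp add: power2_eq_square algebra_simps)
    also have "\<eta> * (2 * s + \<eta>) \<le> \<eta> * (2 * Y k + 1)" using s \<eta> by (intro mult_left_mono) auto
    finally show ?thesis by (simp add: s_def)
  qed
  have "(\<Sum>k\<in>P. (Y k)^2) \<le> (\<Sum>k\<in>P. (\<sigma> k (Fs k))^2 + \<eta> * (2 * Y k + 1))"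
    using pt by (rule sum_mono)
  also have "\<dots> = (\<Sum>k\<in>P. (\<sigma> k (Fs k))^2) + (\<Sum>k\<in>P. \<eta> * (2 * Y k + 1))"
    by (rule sum.distrib)
  also have "(\<Sum>k\<in>P. \<eta> * (2 * Y k + 1)) = \<eta> * Z"
    by (simp only: Z_def sum_distrib_left)
  also have "(\<Sum>k\<in>P. (\<sigma> k (Fs k))^2) \<le> B" using Fs by (intro bound) auto
  also have "\<eta> * Z \<le> e"
  proof -
    have "\<eta> * Z \<le> (e / (Z + 1)) * Z" using Z0 by (intro mult_right_mono) (auto simp: \<eta>_def)
    also have "\<dots> \<le> e" using Z0 e by (simp add: field_simps)
    finally show ?thesis .
  qed
  finally show "(\<Sum>k\<in>P. (Y k)^2) \<le> B + e" by simp
qed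

lemma ennreal_sum_infsum:
  fixes H :: "'a \<Rightarrow> 'b \<Rightarrow> ennreal"
  assumes "finite T0"
  shows "(\<Sum>t\<in>T0. infsum (H t) L) = infsum (\<lambda>l. \<Sum>t\<in>T0. H t l) L"
  using assms
proof (induction T0 rule: finite_induct)
  case empty thus ?case by simp
next
  case (insert a T0)
  have "infsum (\<lambda>l. \<Sum>t\<in>insert a T0. H t l) L = infsum (\<lambda>l. H a l + (\<Sum>t\<in>T0. H t l)) L"
    using insert by simp
  also have "\<dots> = infsum (H a) L + infsum (\<lambda>l. \<Sum>t\<in>T0. H t l) L"
    by (intro infsum_add nonneg_summable_on_complete) simp_all
  finally show ?case using insert by simp
qed

lemma ennreal_infsum_real:
  fixes a :: "'s \<Rightarrow> real"
  assumes "a summable_on A" "\<And>x. x \<in> A \<Longrightarrow> a x \<ge> 0"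
  shows "infsum (\<lambda>s. ennreal (a s)) A = ennreal (infsum a A)"
proof -
  have "infsum (\<lambda>s. ennreal (a s)) A = (SUP F\<in>{F. finite F \<and> F \<subseteq> A}. sum (\<lambda>s. ennreal (a s)) F)"
    by (rule nonneg_infsum_complete) simp
  also have "\<dots> = (SUP F\<in>{F. finite F \<and> F \<subseteq> A}. ennreal (sum a F))"
    using assms(2) by (intro SUP_cong refl) (auto intro!: sum_ennreal)
  also have "\<dots> = ennreal (infsum a A)"
    using infsum_nonneg_is_SUPREMUM_ennreal[OF assms] by simp
  finally show ?thesis .
qed


lemma main_bound:
  fixes g :: "real \<Rightarrow> complex" and T S :: "real set"
    and gs :: "real \<times> real \<Rightarrow> (real \<Rightarrow> complex) \<Rightarrow> complex"
  assumes p: "1 < p" "p < 2"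
    and g: "g \<in> Lp p" "Lp_norm p g = 1"
    and fr: "Lp_uncond_frame p (T \<times> S) (\<lambda>(t, s) x. expo s x * transl t g x) gs K"
    and \<delta>: "\<delta> > 0"
    and sup: "(SUP \<sigma>\<in>{0<..<\<delta>}. LINT x|lborel. cmod (g x) powr p * cmod (expo \<sigma> x - 1) powr p) < 2 powr (- p)"
    and f: "f \<in> Lp p"
  shows "(\<Sum>\<^sub>\<infinity>t\<in>T. \<Sum>\<^sub>\<infinity>l\<in>(UNIV::int set).
           (\<Sum>\<^sub>\<infinity>s\<in>{s\<in>S. of_int l * \<delta> \<le> s \<and> s < (of_int l + 1) * \<delta>}.
              ennreal (cmod (gs (t, s) f))) ^ 2)
        \<le> ennreal ((2 * K * 12 * Lp_norm p f) ^ 2)"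
proof -
  have p0: "p > 0" using p by simp
  define Sl where "Sl = (\<lambda>l::int. {s\<in>S. of_int l * \<delta> \<le> s \<and> s < (of_int l + 1) * \<delta>})"
  define a where "a = (\<lambda>t s. cmod (gs (t, s) f))"
  define X where "X = K * Lp_norm p f"
  define B' where "B' = 4 * (12 * X powr p) powr (2/p)"
  define B where "B = (2 * K * 12 * Lp_norm p f) ^ 2"
  have coreP: "(\<Sum>k\<in>P. (\<Sum>s\<in>F k. a (fst k) s)^2) \<le> B'"
    if "finite P" "P \<subseteq> T \<times> UNIV" "\<And>k. k \<in> P \<Longrightarrow> finite (F k) \<and> F k \<subseteq> Sl (snd k)" for P F
    unfolding a_def B'_def X_def
    by (rule core[OF p g fr \<delta> sup f that(1,2)]) (use that(3) in \<open>simp add: Sl_def\<close>)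
  have X0: "X \<ge> 0"
  proof -
    have "\<forall>\<theta>::real \<times> real \<Rightarrow> complex. (\<forall>i\<in>T \<times> S. cmod (\<theta> i) \<le> 1) \<longrightarrow>
           (\<exists>y\<in>Lp p. Lp_uncond_conv p (T \<times> S) (\<lambda>i. \<theta> i * gs i f) (\<lambda>(t, s) x. expo s x * transl t g x) y \<and>
                      Lp_norm p y \<le> K * Lp_norm p f)"
      using fr f unfolding Lp_uncond_frame_def by blast
    hence "\<exists>y\<in>Lp p. Lp_uncond_conv p (T \<times> S) (\<lambda>i. 0 * gs i f) (\<lambda>(t, s) x. expo s x * transl t g x) y \<and>
                      Lp_norm p y \<le> K * Lp_norm p f"
      by (rule allE[where x = "\<lambda>_. 0"]) simp
    then obtain y where "y \<in> Lp p" "Lp_norm p y \<le> K * Lp_norm p f" by blast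
    thus ?thesis using Lp_norm_nonneg[of p y] by (simp add: X_def)
  qed
  have B'B: "B' \<le> B"
  proof -
    have "(12 * X powr p) powr (2/p) = 12 powr (2/p) * (X powr p) powr (2/p)"
      using X0 by (simp add: powr_mult)
    also have "(X powr p) powr (2/p) = X powr 2" using p0 by (simp add: powr_powr)
    also have "X powr 2 = X ^ 2"
    proof (cases "X = 0")
      case False
      hence "X > 0" using X0 by simp
      thus ?thesis using powr_realpow[of X 2] by simp
    qed simp
    also have "12 powr (2/p) \<le> (12::real) powr 2"
      using p by (intro powr_mono) (auto simp: divide_le_eq)
    hence "12 powr (2/p) * X^2 \<le> 12 powr 2 * X^2" by (intro mult_right_mono) auto
    finally have "(12 * X powr p) powr (2/p) \<le> 144 * X^2" by simp
    hence "B' \<le> 4 * (144 * X^2)" unfolding B'_def by simp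
    also have "\<dots> = B" unfolding B_def X_def by (simp add: power2_eq_square algebra_simps)
    finally show ?thesis .
  qed
  have a0: "a t s \<ge> 0" for t s by (simp add: a_def)
  have sumF: "sum (a t) F \<le> sqrt B'" if "t \<in> T" "finite F" "F \<subseteq> Sl l" for t F l
  proof -
    have "(\<Sum>k\<in>{(t, l)}. (\<Sum>s\<in>(\<lambda>_. F) k. a (fst k) s)^2) \<le> B'"
      by (rule coreP) (use that in auto)
    hence "(sum (a t) F)^2 \<le> B'" by simp
    thus ?thesis by (rule real_le_rsqrt)
  qed
  have bdd: "bdd_above (sum (a t) ` {F. finite F \<and> F \<subseteq> Sl l})" if "t \<in> T" for t l
    using sumF[OF that] by (intro bdd_aboveI2) auto
  have summ: "(a t) summable_on (Sl l)" if "t \<in> T" for t l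
    using bdd[OF that, of l] a0 by (intro nonneg_bdd_above_summable_on) (auto simp: conj_commute)
  define Y where "Y = (\<lambda>t l. infsum (a t) (Sl l))"
  have Y0: "Y t l \<ge> 0" for t l unfolding Y_def by (rule infsum_nonneg) (simp add: a0)
  have Ysup: "Y t l = (SUP F\<in>{F. finite F \<and> F \<subseteq> Sl l}. sum (a t) F)" if "t \<in> T" for t l
    unfolding Y_def by (rule infsum_nonneg_is_SUPREMUM_real[OF summ[OF that]]) (simp add: a0)
  have Yapprox: "\<exists>F\<in>{F. finite F \<and> F \<subseteq> Sl l}. Y t l - \<eta> < sum (a t) F \<and> 0 \<le> sum (a t) F \<and> sum (a t) F \<le> Y t l"
    if t\<eta>: "t \<in> T" "\<eta> > 0" for t l \<eta>
  proof -
    have "Y t l - \<eta> < (SUP F\<in>{F. finite F \<and> F \<subseteq> Sl l}. sum (a t) F)" using Ysup[OF t\<eta>(1)] t\<eta>(2) by simp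
    then obtain F where F: "F \<in> {F. finite F \<and> F \<subseteq> Sl l}" "Y t l - \<eta> < sum (a t) F"
      using less_cSUP_iff[of "{F. finite F \<and> F \<subseteq> Sl l}" "sum (a t)"] bdd[OF t\<eta>(1), of l] by blast
    moreover have "sum (a t) F \<le> Y t l"
      unfolding Y_def using F(1) by (intro finite_sum_le_infsum summ[OF t\<eta>(1)]) (auto simp: a0)
    moreover have "0 \<le> sum (a t) F" by (intro sum_nonneg) (simp add: a0)
    ultimately show ?thesis by blast
  qed
  have ennY: "infsum (\<lambda>s. ennreal (a t s)) (Sl l) = ennreal (Y t l)" if "t \<in> T" for t l
    unfolding Y_def by (rule ennreal_infsum_real[OF summ[OF that]]) (simp add: a0)
  have finb: "(\<Sum>k\<in>P. (Y (fst k) (snd k))^2) \<le> B'" if P: "finite P" "P \<subseteq> T \<times> UNIV" for P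
  proof (rule eps_sq[OF P(1), where A = "\<lambda>k. {F. finite F \<and> F \<subseteq> Sl (snd k)}" and \<sigma> = "\<lambda>k F. sum (a (fst k)) F"])
    show "\<And>k. k \<in> P \<Longrightarrow> 0 \<le> Y (fst k) (snd k)" by (rule Y0)
    show "\<exists>F\<in>{F. finite F \<and> F \<subseteq> Sl (snd k)}. Y (fst k) (snd k) - \<eta> < sum (a (fst k)) F \<and> 0 \<le> sum (a (fst k)) F \<and> sum (a (fst k)) F \<le> Y (fst k) (snd k)"
      if "k \<in> P" "\<eta> > 0" for k \<eta>
      using Yapprox[of "fst k" \<eta> "snd k"] that P(2) by auto
    show "(\<Sum>k\<in>P. (sum (a (fst k)) (Fs k))^2) \<le> B'" if "\<forall>k\<in>P. Fs k \<in> {F. finite F \<and> F \<subseteq> Sl (snd k)}" for Fs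
      by (rule coreP[OF P]) (use that in auto)
  qed
  have "(\<Sum>\<^sub>\<infinity>t\<in>T. \<Sum>\<^sub>\<infinity>l\<in>(UNIV::int set). (\<Sum>\<^sub>\<infinity>s\<in>Sl l. ennreal (a t s)) ^ 2)
      = (\<Sum>\<^sub>\<infinity>t\<in>T. \<Sum>\<^sub>\<infinity>l\<in>(UNIV::int set). ennreal ((Y t l)^2))"
    by (intro infsum_cong) (simp add: ennY ennreal_power Y0)
  also have "\<dots> \<le> ennreal B"
  proof (rule infsum_le_finite_sums)
    show "(\<lambda>t. \<Sum>\<^sub>\<infinity>l\<in>(UNIV::int set). ennreal ((Y t l)^2)) summable_on T"
      by (rule nonneg_summable_on_complete) simp
    fix T0 assume T0: "finite T0" "T0 \<subseteq> T"
    have "(\<Sum>t\<in>T0. \<Sum>\<^sub>\<infinity>l\<in>(UNIV::int set). ennreal ((Y t l)^2)) = (\<Sum>\<^sub>\<infinity>l\<in>(UNIV::int set). \<Sum>t\<in>T0. ennreal ((Y t l)^2))"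
      by (rule ennreal_sum_infsum[OF T0(1)])
    also have "\<dots> \<le> ennreal B"
    proof (rule infsum_le_finite_sums)
      show "(\<lambda>l. \<Sum>t\<in>T0. ennreal ((Y t l)^2)) summable_on (UNIV::int set)"
        by (rule nonneg_summable_on_complete) simp
      fix L0 :: "int set" assume L0: "finite L0" "L0 \<subseteq> UNIV"
      have "(\<Sum>l\<in>L0. \<Sum>t\<in>T0. ennreal ((Y t l)^2)) = ennreal (\<Sum>l\<in>L0. \<Sum>t\<in>T0. (Y t l)^2)"
        by (simp add: sum_nonneg)
      also have "(\<Sum>l\<in>L0. \<Sum>t\<in>T0. (Y t l)^2) = (\<Sum>k\<in>T0 \<times> L0. (Y (fst k) (snd k))^2)"
        by (subst sum.swap) (simp add: sum.cartesian_product split_beta)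
      also have "\<dots> \<le> B'" using T0 L0 by (intro finb) auto
      also have "\<dots> \<le> B" by (rule B'B)
      finally show "(\<Sum>l\<in>L0. \<Sum>t\<in>T0. ennreal ((Y t l)^2)) \<le> ennreal B"
        by (simp add: ennreal_leI)
    qed
    finally show "(\<Sum>t\<in>T0. \<Sum>\<^sub>\<infinity>l\<in>(UNIV::int set). ennreal ((Y t l)^2)) \<le> ennreal B" .
  qed
  finally show ?thesis unfolding B_def Sl_def a_def .
qed

theorem mainTheorem11:
  fixes p :: real
  assumes "1 < p" "p < 2"
  shows "\<exists>C::real. \<forall>(g::real \<Rightarrow> complex) (T::real set) (S::real set)
            (gs::real \<times> real \<Rightarrow> (real \<Rightarrow> complex) \<Rightarrow> complex) (K::real) (\<delta>::real).
     g \<in> Lp p \<and> Lp_norm p g = 1 \<and> countable T \<and> countable S \<and>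
     Lp_uncond_frame p (T \<times> S) (\<lambda>(t, s) x. expo s x * transl t g x) gs K \<and>
     \<delta> > 0 \<and>
     (SUP \<sigma>\<in>{0<..<\<delta>}. LINT x|lborel. cmod (g x) powr p * cmod (expo \<sigma> x - 1) powr p)
        < 2 powr (- p)
     \<longrightarrow>
     (\<forall>f\<in>Lp p.
        (\<Sum>\<^sub>\<infinity>t\<in>T. \<Sum>\<^sub>\<infinity>l\<in>(UNIV::int set).
           (\<Sum>\<^sub>\<infinity>s\<in>{s\<in>S. of_int l * \<delta> \<le> s \<and> s < (of_int l + 1) * \<delta>}.
              ennreal (cmod (gs (t, s) f))) ^ 2)
        \<le> ennreal ((2 * K * C * Lp_norm p f) ^ 2))"
  by (intro exI[of _ "12::real"] allI impI ballI, elim conjE, rule main_bound[OF assms], assumption+)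

end
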